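(* Let $W$ be a $V$-module, $z,z_1$ nonzero complex numbers and $p\in\mathbb Z$. Then the linear automorphism $e^{l_p(z)L^*(0)}$ of $W^*$ maps $\mathcal D_{P(z_1)}(W)$ onto $\mathcal D_{P(zz_1)}(W)$, and for all $v\in V$, $\alpha\in\mathcal D_{P(z_1)}(W)$: $$e^{l_p(z)L^*(0)}Y^R_{P(z_1)}(v,x)\alpha=Y^R_{P(zz_1)}(z^{L(0)}v,zx)e^{l_p(z)L^*(0)}\alpha,\qquad e^{l_p(z)L^*(0)}Y^L_{P(z_1)}(v,x)\alpha=Y^L_{P(zz_1)}(z^{L(0)}v,zx)e^{l_p(z)L^*(0)}\alpha.$$
   Context: $V$ is a vertex operator algebra with vacuum $\mathbf 1$, Virasoro element $\omega$, $Y(\omega,x)=\sum_{n}L(n)x^{-n-2}$, $V=\coprod_{n\in\mathbb Z}V_{(n)}$ with $L(0)=n$ on $V_{(n)}$; $z^{L(0)}v=z^nv$ for $v\in V_{(n)}$. A $V$-module is a vector space $W=\coprod_{h\in\mathbb C}W_{(h)}$ with $Y_W:V\to(\mathrm{End}\,W)[[x,x^{-1}]]$ satisfying truncation $Y_W(v,x)w\in W((x))$, $Y_W(\mathbf 1,x)=\mathrm{id}$, the Jacobi identity $x_0^{-1}\delta(\frac{x_1-x_2}{x_0})Y_W(u,x_1)Y_W(v,x_2)-x_0^{-1}\delta(\frac{x_2-x_1}{-x_0})Y_W(v,x_2)Y_W(u,x_1)=x_2^{-1}\delta(\frac{x_1-x_0}{x_2})Y_W(Y(u,x_0)v,x_2)$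 (with $\delta(x)=\sum_nx^n$, binomials expanded in nonnegative powers of the second variable), $L(0)=h$ on $W_{(h)}$, $\dim W_{(h)}<\infty$, and $W_{(h+n)}=0$ for sufficiently negative integers $n$. $W^*=\prod_hW_{(h)}^*$. $\log z=\log|z|+i\arg z$ with $0\le\arg z<2\pi$, $l_p(z)=\log z+2p\pi i$; $e^{l_p(z)L^*(0)}$ acts on $W_{(h)}^*\subset W^*$ as multiplication by $e^{hl_p(z)}$. For $v\in V$ let $Y^o(v,x)=Y_W(e^{xL(1)}(-x^{-2})^{L(0)}v,x^{-1})$. For a nonzero complex $z'$, $\alpha\in W^*$ is a $P(z')$-linear functional if for all $v\in V,w\in W$ the series $\langle\alpha,Y^o(v,x)w\rangle$ converges absolutely in $|x|>|z'|$ to a rational function in $\mathbb C[x,x^{-1},(x-z')^{-1}]$, with pole orders at $0,z'$ bounded independently of $w$ for fixed $v$; $\mathcal D_{P(z')}(W)$ is the space of these. With $\iota_{x;\infty},\iota_{x;0}$ the Laurent expansion maps of rational functions at $x=\infty$ and $x=0$ and $f_{v,\alpha,w}=\iota_{x;\infty}^{-1}\langle\alpha,Y^o(v,x)w\rangle$, define for $\alpha\in\mathcal D_{P(z')}(W)$: $\langle Y^R_{P(z')}(v,x)\alpha,w\rangle=\iota_{x;0}f_{v,\alpha,w}(x)$ and $\langle Y^L_{P(z')}(v,x)\alpha,w\rangle=\iota_{x;0}\big(f_{v,\alpha,w}(x+z')\big)$. *)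

theory Defs
  imports "HOL-Analysis.Analysis" "HOL-Computational_Algebra.Polynomial"
begin

definition gcomps :: "('i \<Rightarrow> 'w::ab_group_add set) \<Rightarrow> 'w \<Rightarrow> 'i \<Rightarrow> 'w" where
  "gcomps E w = (THE f. finite {h. f h \<noteq> 0} \<and> (\<forall>h. f h \<in> E h) \<and> w = sum f {h. f h \<noteq> 0})"

definition is_dirsum :: "('i \<Rightarrow> 'w::ab_group_add set) \<Rightarrow> bool" where
  "is_dirsum E \<longleftrightarrow> (\<forall>w. \<exists>S f. finite S \<and> (\<forall>h\<in>S. f h \<in> E h) \<and> w = sum f S)"

definition fin_dim :: "(complex \<Rightarrow> 'w::ab_group_add \<Rightarrow> 'w) \<Rightarrow> 'w set \<Rightarrow> bool" where
  "fin_dim s U \<longleftrightarrow> (\<exists>B. finite B \<and> U \<subseteq> module.span s B)"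

text \<open>Mode conventions: Y v n w is the coefficient v_n w of x^(-n-1) in Y(v,x)w.\<close>
definition mode_trunc :: "('v \<Rightarrow> int \<Rightarrow> 'w \<Rightarrow> 'w::ab_group_add) \<Rightarrow> bool" where
  "mode_trunc Y \<longleftrightarrow> (\<forall>v w. \<exists>N. \<forall>n\<ge>N. Y v n w = 0)"

definition bilinear_modes ::
  "(complex \<Rightarrow> 'v::ab_group_add \<Rightarrow> 'v) \<Rightarrow> (complex \<Rightarrow> 'w::ab_group_add \<Rightarrow> 'w)
   \<Rightarrow> ('v \<Rightarrow> int \<Rightarrow> 'w \<Rightarrow> 'w) \<Rightarrow> bool" where
  "bilinear_modes sV sW Y \<longleftrightarrow>
     (\<forall>n w. Vector_Spaces.linear sV sW (\<lambda>v. Y v n w)) \<and> (\<forall>v n. Vector_Spaces.linear sW sW (Y v n))"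

text \<open>The Jacobi identity, written coefficientwise: the coefficient of
  x0^(-l-1) x1^(-m-1) x2^(-n-1) of the Jacobi identity (Borcherds identity).
  All three sums over i are finite by truncation; K is any bound beyond which all terms vanish.\<close>
definition jacobi ::
  "('v \<Rightarrow> int \<Rightarrow> 'v \<Rightarrow> 'v::ab_group_add) \<Rightarrow> ('v \<Rightarrow> int \<Rightarrow> 'w \<Rightarrow> 'w::ab_group_add)
   \<Rightarrow> (complex \<Rightarrow> 'w \<Rightarrow> 'w) \<Rightarrow> bool" where
  "jacobi YV YM sM \<longleftrightarrow> (\<forall>u v w l m n (K::nat).
     (\<forall>i\<ge>K. YV u (l + int i) v = 0 \<and> YM v (n + int i) w = 0 \<and> YM u (m + int i) w = 0) \<longrightarrow>
     (\<Sum>i<K. sM (of_int m gchoose i) (YM (YV u (l + int i) v) (m + n - int i) w))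
     = (\<Sum>i<K. sM ((-1)^i * (of_int l gchoose i)) (YM u (l + m - int i) (YM v (n + int i) w))
              - sM ((-1)^i * (-1) powi l * (of_int l gchoose i)) (YM v (l + n - int i) (YM u (m + int i) w))))"

definition Vgr :: "(complex \<Rightarrow> 'v::ab_group_add \<Rightarrow> 'v) \<Rightarrow> ('v \<Rightarrow> int \<Rightarrow> 'v \<Rightarrow> 'v) \<Rightarrow> 'v \<Rightarrow> int \<Rightarrow> 'v set" where
  "Vgr sV Y \<omega> n = {v. Y \<omega> 1 v = sV (of_int n) v}"   (* V_(n): L(0) = n, where L(0) = omega_1 *)

definition is_VOA :: "(complex \<Rightarrow> 'v::ab_group_add \<Rightarrow> 'v) \<Rightarrow> ('v \<Rightarrow> int \<Rightarrow> 'v \<Rightarrow> 'v) \<Rightarrow> 'v \<Rightarrow> 'v \<Rightarrow> bool" where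
  "is_VOA sV Y one \<omega> \<longleftrightarrow>
     vector_space sV \<and> bilinear_modes sV sV Y \<and> mode_trunc Y \<and>
     is_dirsum (Vgr sV Y \<omega>) \<and> (\<forall>n. fin_dim sV (Vgr sV Y \<omega> n)) \<and>
     (\<exists>N. \<forall>n<N. Vgr sV Y \<omega> n = {0}) \<and>
     (\<forall>n w. Y one n w = (if n = -1 then w else 0)) \<and>
     (\<forall>v. (\<forall>n\<ge>0. Y v n one = 0) \<and> Y v (-1) one = v) \<and>
     jacobi Y Y sV \<and>
     (\<exists>c::complex. \<forall>m n v. Y \<omega> (m+1) (Y \<omega> (n+1) v) - Y \<omega> (n+1) (Y \<omega> (m+1) v)
         = sV (of_int (m - n)) (Y \<omega> (m+n+1) v)
           + (if m + n = 0 then sV ((of_int m ^ 3 - of_int m) / 12 * c) v else 0)) \<and>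
     \<omega> \<in> Vgr sV Y \<omega> 2 \<and>
     (\<forall>v n w. Y (Y \<omega> 0 v) n w = sV (- of_int n) (Y v (n - 1) w))"

definition Wgr :: "(complex \<Rightarrow> 'w::ab_group_add \<Rightarrow> 'w) \<Rightarrow> ('v \<Rightarrow> int \<Rightarrow> 'w \<Rightarrow> 'w) \<Rightarrow> 'v \<Rightarrow> complex \<Rightarrow> 'w set" where
  "Wgr sW YW \<omega> h = {w. YW \<omega> 1 w = sW h w}"

definition is_module ::
  "(complex \<Rightarrow> 'v::ab_group_add \<Rightarrow> 'v) \<Rightarrow> ('v \<Rightarrow> int \<Rightarrow> 'v \<Rightarrow> 'v) \<Rightarrow> 'v \<Rightarrow> 'v
   \<Rightarrow> (complex \<Rightarrow> 'w::ab_group_add \<Rightarrow> 'w) \<Rightarrow> ('v \<Rightarrow> int \<Rightarrow> 'w \<Rightarrow> 'w) \<Rightarrow> bool" where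
  "is_module sV Y one \<omega> sW YW \<longleftrightarrow>
     vector_space sW \<and> bilinear_modes sV sW YW \<and> mode_trunc YW \<and>
     (\<forall>n w. YW one n w = (if n = -1 then w else 0)) \<and>
     jacobi Y YW sW \<and>
     is_dirsum (Wgr sW YW \<omega>) \<and> (\<forall>h. fin_dim sW (Wgr sW YW \<omega> h)) \<and>
     (\<forall>h. \<exists>N. \<forall>n::int. n < N \<longrightarrow> Wgr sW YW \<omega> (h + of_int n) = {0})"

definition dual :: "(complex \<Rightarrow> 'w::ab_group_add \<Rightarrow> 'w) \<Rightarrow> ('w \<Rightarrow> complex) set" where
  "dual sW = {\<alpha>. Vector_Spaces.linear sW (*) \<alpha>}"

definition arg0 :: "complex \<Rightarrow> real" where
  "arg0 z = (THE t. 0 \<le> t \<and> t < 2 * pi \<and> z = of_real (cmod z) * exp (\<i> * of_real t))"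

definition logc :: "complex \<Rightarrow> complex" where
  "logc z = of_real (ln (cmod z)) + \<i> * of_real (arg0 z)"

definition lp :: "int \<Rightarrow> complex \<Rightarrow> complex" where
  "lp p z = logc z + 2 * of_int p * of_real pi * \<i>"

text \<open>e^{l L*(0)} on W*: multiplication by e^{h l} on W_(h)^*.\<close>
definition EL0 :: "(complex \<Rightarrow> 'w::ab_group_add \<Rightarrow> 'w) \<Rightarrow> ('v \<Rightarrow> int \<Rightarrow> 'w \<Rightarrow> 'w) \<Rightarrow> 'v
    \<Rightarrow> complex \<Rightarrow> ('w \<Rightarrow> complex) \<Rightarrow> ('w \<Rightarrow> complex)" where
  "EL0 sW YW \<omega> l \<alpha> = (\<lambda>w. let c = gcomps (Wgr sW YW \<omega>) w in
      \<Sum>h\<in>{h. c h \<noteq> 0}. exp (h * l) * \<alpha> (c h))"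

definition zL0 :: "(complex \<Rightarrow> 'v::ab_group_add \<Rightarrow> 'v) \<Rightarrow> ('v \<Rightarrow> int \<Rightarrow> 'v \<Rightarrow> 'v) \<Rightarrow> 'v
    \<Rightarrow> complex \<Rightarrow> 'v \<Rightarrow> 'v" where
  "zL0 sV Y \<omega> z v = (let c = gcomps (Vgr sV Y \<omega>) v in \<Sum>n\<in>{n. c n \<noteq> 0}. sV (z powi n) (c n))"

text \<open>Coefficient of x^j in the formal series <alpha, Y^o(v,x) w>, where
  Y^o(v,x) = Y_W(e^{x L(1)} (-x^(-2))^{L(0)} v, x^(-1)) and L(1) = omega_2.
  For v in V_(n): sum over k of (-1)^n/k! x^(k-2n) Y_W(L(1)^k v, x^(-1)).\<close>
definition Yo_coeff :: "(complex \<Rightarrow> 'v::ab_group_add \<Rightarrow> 'v) \<Rightarrow> ('v \<Rightarrow> int \<Rightarrow> 'v \<Rightarrow> 'v) \<Rightarrow> 'v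
    \<Rightarrow> ('v \<Rightarrow> int \<Rightarrow> 'w \<Rightarrow> 'w) \<Rightarrow> ('w \<Rightarrow> complex) \<Rightarrow> 'v \<Rightarrow> 'w \<Rightarrow> int \<Rightarrow> complex" where
  "Yo_coeff sV Y \<omega> YW \<alpha> v w j = (let c = gcomps (Vgr sV Y \<omega>) v; L1 = Y \<omega> 2 in
      \<Sum>n\<in>{n. c n \<noteq> 0}. \<Sum>k\<in>{k::nat. (L1 ^^ k) (c n) \<noteq> 0}.
        ((-1) powi n / of_nat (fact k)) * \<alpha> (YW ((L1 ^^ k) (c n)) (j - int k + 2 * n - 1) w))"

definition conv_out :: "(int \<Rightarrow> complex) \<Rightarrow> complex \<Rightarrow> (complex \<Rightarrow> complex) \<Rightarrow> bool" where
  "conv_out c z' f \<longleftrightarrow> (\<forall>x. cmod x > cmod z' \<longrightarrow>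
      (\<lambda>j. norm (c j * x powi j)) summable_on UNIV \<and> ((\<lambda>j. c j * x powi j) has_sum f x) UNIV)"

text \<open>f is (on C - {0,z'}) an element of C[x,x^-1,(x-z')^-1] with pole order at most a at 0
  and at most b at z'.\<close>
definition ratP :: "complex \<Rightarrow> (complex \<Rightarrow> complex) \<Rightarrow> nat \<Rightarrow> nat \<Rightarrow> bool" where
  "ratP z' f a b \<longleftrightarrow> (\<exists>q. \<forall>x. x \<noteq> 0 \<and> x \<noteq> z' \<longrightarrow> f x = poly q x / (x ^ a * (x - z') ^ b))"

definition DP :: "(complex \<Rightarrow> 'v::ab_group_add \<Rightarrow> 'v) \<Rightarrow> ('v \<Rightarrow> int \<Rightarrow> 'v \<Rightarrow> 'v) \<Rightarrow> 'v
    \<Rightarrow> (complex \<Rightarrow> 'w::ab_group_add \<Rightarrow> 'w) \<Rightarrow> ('v \<Rightarrow> int \<Rightarrow> 'w \<Rightarrow> 'w) \<Rightarrow> complex \<Rightarrow> ('w \<Rightarrow> complex) set" where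
  "DP sV Y \<omega> sW YW z' = {\<alpha> \<in> dual sW. \<forall>v. \<exists>a b. \<forall>w. \<exists>f.
      conv_out (Yo_coeff sV Y \<omega> YW \<alpha> v w) z' f \<and> ratP z' f a b}"

definition laurent0 :: "real \<Rightarrow> (complex \<Rightarrow> complex) \<Rightarrow> (int \<Rightarrow> complex) \<Rightarrow> bool" where
  "laurent0 r g c \<longleftrightarrow> (\<exists>N. \<forall>j<N. c j = 0) \<and>
     (\<forall>x. 0 < cmod x \<and> cmod x < r \<longrightarrow> ((\<lambda>j. c j * x powi j) has_sum g x) UNIV)"

text \<open>Coefficient of x^j of Y^R_{P(z')}(v,x) alpha, as an element of W*.\<close>
definition YR :: "(complex \<Rightarrow> 'v::ab_group_add \<Rightarrow> 'v) \<Rightarrow> ('v \<Rightarrow> int \<Rightarrow> 'v \<Rightarrow> 'v) \<Rightarrow> 'v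
    \<Rightarrow> ('v \<Rightarrow> int \<Rightarrow> 'w \<Rightarrow> 'w) \<Rightarrow> complex \<Rightarrow> 'v \<Rightarrow> ('w \<Rightarrow> complex) \<Rightarrow> int \<Rightarrow> 'w \<Rightarrow> complex" where
  "YR sV Y \<omega> YW z' v \<alpha> j w = (THE c. \<exists>f. conv_out (Yo_coeff sV Y \<omega> YW \<alpha> v w) z' f \<and>
      (\<exists>a b. ratP z' f a b) \<and> laurent0 (cmod z') f c) j"

text \<open>Coefficient of x^j of Y^L_{P(z')}(v,x) alpha: expansion at 0 of f(x + z').\<close>
definition YL :: "(complex \<Rightarrow> 'v::ab_group_add \<Rightarrow> 'v) \<Rightarrow> ('v \<Rightarrow> int \<Rightarrow> 'v \<Rightarrow> 'v) \<Rightarrow> 'v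
    \<Rightarrow> ('v \<Rightarrow> int \<Rightarrow> 'w \<Rightarrow> 'w) \<Rightarrow> complex \<Rightarrow> 'v \<Rightarrow> ('w \<Rightarrow> complex) \<Rightarrow> int \<Rightarrow> 'w \<Rightarrow> complex" where
  "YL sV Y \<omega> YW z' v \<alpha> j w = (THE c. \<exists>f. conv_out (Yo_coeff sV Y \<omega> YW \<alpha> v w) z' f \<and>
      (\<exists>a b. ratP z' f a b) \<and> laurent0 (cmod z') (\<lambda>x. f (x + z')) c) j"

end

theory Submission
  imports Defs "HOL-Complex_Analysis.Complex_Analysis"
begin


lemma lin_add: "Vector_Spaces.linear s1 s2 f \<Longrightarrow> f (x + y) = f x + f y"
  by (simp add: Vector_Spaces.linear_iff)
lemma lin_scale: "Vector_Spaces.linear s1 s2 f \<Longrightarrow> f (s1 c x) = s2 c (f x)"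
  by (simp add: Vector_Spaces.linear_iff)
lemma lin_0: "Vector_Spaces.linear s1 s2 f \<Longrightarrow> f 0 = 0"
  using lin_add[of s1 s2 f 0 0] by simp
lemma lin_sum: "Vector_Spaces.linear s1 s2 f \<Longrightarrow> f (sum g S) = (\<Sum>x\<in>S. f (g x))"
  by (induct S rule: infinite_finite_induct) (auto simp: lin_0 lin_add)
lemma lin_neg: "Vector_Spaces.linear s1 s2 f \<Longrightarrow> f (- x) = - f x"
proof -
  assume l: "Vector_Spaces.linear s1 s2 f"
  have "f x + f (- x) = 0" using lin_add[OF l, of x "-x"] lin_0[OF l] by simp
  then show ?thesis by (metis minus_unique)
qed
lemma lin_diff: "Vector_Spaces.linear s1 s2 f \<Longrightarrow> f (x - y) = f x - f y"
  using lin_add[of s1 s2 f x "-y"] lin_neg[of s1 s2 f y] by simp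
lemma lin_vs1: "Vector_Spaces.linear s1 s2 f \<Longrightarrow> vector_space s1"
  by (simp add: Vector_Spaces.linear_iff)
lemma lin_vs2: "Vector_Spaces.linear s1 s2 f \<Longrightarrow> vector_space s2"
  by (simp add: Vector_Spaces.linear_iff)

locale eigdec =
  fixes s :: "complex \<Rightarrow> 'w::ab_group_add \<Rightarrow> 'w" and T :: "'w \<Rightarrow> 'w"
    and \<phi> :: "'i \<Rightarrow> complex" and E :: "'i \<Rightarrow> 'w set"
  assumes vs: "vector_space s" and linT: "Vector_Spaces.linear s s T" and inj\<phi>: "inj \<phi>"
    and E_def: "E h = {w. T w = s (\<phi> h) w}" and dirsum: "is_dirsum E"
begin

sublocale vs: vector_space s by (rule vs)

lemma E_0: "0 \<in> E h"
  by (simp add: E_def lin_0[OF linT])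
lemma E_add: "x \<in> E h \<Longrightarrow> y \<in> E h \<Longrightarrow> x + y \<in> E h"
  by (simp add: E_def lin_add[OF linT] vs.scale_right_distrib)
lemma E_scale: "x \<in> E h \<Longrightarrow> s c x \<in> E h"
  by (simp add: E_def lin_scale[OF linT] mult.commute)
lemma E_diff: "x \<in> E h \<Longrightarrow> y \<in> E h \<Longrightarrow> x - y \<in> E h"
  by (simp add: E_def lin_diff[OF linT] vs.scale_right_diff_distrib)

lemma indep: "finite S \<Longrightarrow> \<forall>g. (\<forall>h\<in>S. g h \<in> E h) \<longrightarrow> sum g S = 0 \<longrightarrow> (\<forall>h\<in>S. g h = 0)"
proof (induct S rule: finite_induct)
  case empty
  then show ?case by simp
next
  case (insert \<mu> S)
  show ?case
  proof (intro allI impI)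
    fix g assume gE: "\<forall>h\<in>insert \<mu> S. g h \<in> E h" and gs: "sum g (insert \<mu> S) = 0"
    have s0: "g \<mu> + sum g S = 0" using gs insert by simp
    have "T (g \<mu> + sum g S) = 0" using s0 lin_0[OF linT] by simp
    then have t1: "s (\<phi> \<mu>) (g \<mu>) + (\<Sum>h\<in>S. s (\<phi> h) (g h)) = 0"
      using gE by (simp add: lin_add[OF linT] lin_sum[OF linT] E_def)
    have t2: "s (\<phi> \<mu>) (g \<mu>) + (\<Sum>h\<in>S. s (\<phi> \<mu>) (g h)) = 0"
      using arg_cong[OF s0, of "s (\<phi> \<mu>)"] by (simp add: vs.scale_right_distrib vs.scale_sum_right)
    have "(\<Sum>h\<in>S. s (\<phi> h - \<phi> \<mu>) (g h)) = (\<Sum>h\<in>S. s (\<phi> h) (g h)) - (\<Sum>h\<in>S. s (\<phi> \<mu>) (g h))"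
      by (simp add: vs.scale_left_diff_distrib sum_subtractf)
    also have "\<dots> = 0" using t1 t2 by (metis add_left_cancel diff_self)
    finally have sm: "(\<Sum>h\<in>S. s (\<phi> h - \<phi> \<mu>) (g h)) = 0" .
    have gE': "\<forall>h\<in>S. s (\<phi> h - \<phi> \<mu>) (g h) \<in> E h" using gE E_scale by blast
    have "\<forall>h\<in>S. s (\<phi> h - \<phi> \<mu>) (g h) = 0"
      using insert(3)[THEN spec[of _ "\<lambda>h. s (\<phi> h - \<phi> \<mu>) (g h)"]] gE' sm by blast
    moreover have "\<forall>h\<in>S. \<phi> h - \<phi> \<mu> \<noteq> 0" using insert(2) inj\<phi> by (metis eq_iff_diff_eq_0 injD)
    ultimately have gS: "\<forall>h\<in>S. g h = 0" by simp
    then have "g \<mu> = 0" using s0 by simp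
    then show "\<forall>h\<in>insert \<mu> S. g h = 0" using gS by simp
  qed
qed

lemma gcomps_eq:
  assumes S: "finite S" and gE: "\<forall>h\<in>S. g h \<in> E h" and w: "w = sum g S"
  shows "gcomps E w = (\<lambda>h. if h \<in> S then g h else 0)"
  unfolding gcomps_def
proof (rule the_equality)
  let ?f0 = "\<lambda>h. if h \<in> S then g h else 0"
  have sub: "{h. ?f0 h \<noteq> 0} \<subseteq> S" by auto
  show "finite {h. ?f0 h \<noteq> 0} \<and> (\<forall>h. ?f0 h \<in> E h) \<and> w = sum ?f0 {h. ?f0 h \<noteq> 0}"
  proof (intro conjI allI)
    show "finite {h. ?f0 h \<noteq> 0}" using finite_subset[OF sub S] .
    fix h show "?f0 h \<in> E h" using gE E_0 by auto
  next
    have "sum ?f0 {h. ?f0 h \<noteq> 0} = sum ?f0 S"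
      by (rule sum.mono_neutral_left[OF S sub]) auto
    also have "\<dots> = sum g S" by simp
    finally show "w = sum ?f0 {h. ?f0 h \<noteq> 0}" using w by simp
  qed
  fix f assume P: "finite {h. f h \<noteq> 0} \<and> (\<forall>h. f h \<in> E h) \<and> w = sum f {h. f h \<noteq> 0}"
  let ?U = "S \<union> {h. f h \<noteq> 0}"
  have U: "finite ?U" using P S by simp
  have a: "sum f ?U = w"
    using P by (subst sum.mono_neutral_right[OF U, of "{h. f h \<noteq> 0}"]) auto
  have b: "sum ?f0 ?U = w"
    using w by (subst sum.mono_neutral_right[OF U, of S]) auto
  have "sum (\<lambda>h. f h - ?f0 h) ?U = 0" using a b by (simp add: sum_subtractf)
  moreover have "\<forall>h\<in>?U. f h - ?f0 h \<in> E h" using P gE E_0 E_diff by auto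
  ultimately have z: "\<forall>h\<in>?U. f h - ?f0 h = 0" using indep[OF U, rule_format, of "\<lambda>h. f h - ?f0 h"] by blast
  show "f = ?f0"
  proof
    fix h show "f h = ?f0 h"
    proof (cases "h \<in> ?U")
      case True then show ?thesis using z by (metis eq_iff_diff_eq_0)
    next
      case False then show ?thesis by auto
    qed
  qed
qed

lemma gcomps_props:
  shows "finite {h. gcomps E w h \<noteq> 0}" and "gcomps E w h \<in> E h"
    and "w = sum (gcomps E w) {h. gcomps E w h \<noteq> 0}"
proof -
  obtain S g where S: "finite S" "\<forall>h\<in>S. g h \<in> E h" "w = sum g S"
    using dirsum unfolding is_dirsum_def by blast
  have eq: "gcomps E w = (\<lambda>h. if h \<in> S then g h else 0)" by (rule gcomps_eq[OF S])
  have sub: "{h. gcomps E w h \<noteq> 0} \<subseteq> S" using eq by auto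
  show "finite {h. gcomps E w h \<noteq> 0}" using finite_subset[OF sub S(1)] .
  show "gcomps E w h \<in> E h" using eq S E_0 by auto
  have "sum (gcomps E w) {h. gcomps E w h \<noteq> 0} = sum (gcomps E w) S"
    by (rule sum.mono_neutral_left[OF S(1) sub]) auto
  also have "\<dots> = sum g S" by (simp add: eq)
  finally show "w = sum (gcomps E w) {h. gcomps E w h \<noteq> 0}" using S(3) by metis
qed

lemma gcomps_sum_super:
  assumes "finite S" "{h. gcomps E w h \<noteq> 0} \<subseteq> S"
  shows "w = sum (gcomps E w) S"
proof -
  have eq: "sum (gcomps E w) {h. gcomps E w h \<noteq> 0} = sum (gcomps E w) S"
    by (rule sum.mono_neutral_left[OF assms]) auto
  show ?thesis using gcomps_props(3)[of w] eq by (rule trans)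
qed

definition wsum :: "('i \<Rightarrow> complex) \<Rightarrow> 'w \<Rightarrow> 'w" where
  "wsum k w = (let c = gcomps E w in \<Sum>h\<in>{h. c h \<noteq> 0}. s (k h) (c h))"

lemma wsum_eq:
  assumes S: "finite S" and gE: "\<forall>h\<in>S. g h \<in> E h" and w: "w = sum g S"
  shows "wsum k w = (\<Sum>h\<in>S. s (k h) (g h))"
proof -
  have eq: "gcomps E w = (\<lambda>h. if h \<in> S then g h else 0)" by (rule gcomps_eq[OF S gE w])
  have sub: "{h. gcomps E w h \<noteq> 0} \<subseteq> S" using eq by auto
  have "wsum k w = (\<Sum>h\<in>S. s (k h) (gcomps E w h))"
    unfolding wsum_def Let_def by (rule sum.mono_neutral_left[OF S sub]) auto
  also have "\<dots> = (\<Sum>h\<in>S. s (k h) (g h))" using eq by simp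
  finally show ?thesis .
qed

lemma wsum_hom: "x \<in> E \<mu> \<Longrightarrow> wsum k x = s (k \<mu>) x"
  using wsum_eq[of "{\<mu>}" "\<lambda>_. x" x k] by simp

lemma gcomps_hom: "x \<in> E \<mu> \<Longrightarrow> gcomps E x = (\<lambda>h. if h = \<mu> then x else 0)"
  using gcomps_eq[of "{\<mu>}" "\<lambda>_. x" x] by simp

lemma decomp2:
  obtains S where "finite S" "w1 = sum (gcomps E w1) S" "w2 = sum (gcomps E w2) S"
proof -
  let ?S = "{h. gcomps E w1 h \<noteq> 0} \<union> {h. gcomps E w2 h \<noteq> 0}"
  have f: "finite ?S" using gcomps_props(1) by simp
  show ?thesis
  proof (rule that[OF f])
    show "w1 = sum (gcomps E w1) ?S" by (rule gcomps_sum_super[OF f]) auto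
    show "w2 = sum (gcomps E w2) ?S" by (rule gcomps_sum_super[OF f]) auto
  qed
qed

lemma decomp1:
  obtains S where "finite S" "w = sum (gcomps E w) S"
proof -
  obtain S where "finite S" "w = sum (gcomps E w) S" "w = sum (gcomps E w) S" by (rule decomp2)
  then show ?thesis using that by blast
qed

lemma wsum_decomp: "finite S \<Longrightarrow> x = sum (gcomps E x) S \<Longrightarrow> wsum k x = (\<Sum>h\<in>S. s (k h) (gcomps E x h))"
  by (rule wsum_eq, assumption, simp add: gcomps_props(2), assumption)

lemma wsum_linear: "Vector_Spaces.linear s s (wsum k)"
  unfolding Vector_Spaces.linear_iff
proof (intro conjI allI)
  show "vector_space s" by (rule vs)+
  show "vector_space s" by (rule vs)
  fix x y
  obtain S where S: "finite S" "x = sum (gcomps E x) S" "y = sum (gcomps E y) S"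
    by (rule decomp2)
  have "x + y = sum (gcomps E x) S + sum (gcomps E y) S"
    using S(2) S(3) by (rule arg_cong2[where f="(+)"])
  also have "\<dots> = (\<Sum>h\<in>S. gcomps E x h + gcomps E y h)" by (simp only: sum.distrib)
  finally have xy: "x + y = (\<Sum>h\<in>S. gcomps E x h + gcomps E y h)" .
  have "wsum k (x + y) = (\<Sum>h\<in>S. s (k h) (gcomps E x h + gcomps E y h))"
    by (rule wsum_eq[OF S(1) _ xy]) (simp add: gcomps_props(2) E_add)
  also have "\<dots> = (\<Sum>h\<in>S. s (k h) (gcomps E x h)) + (\<Sum>h\<in>S. s (k h) (gcomps E y h))"
    by (simp add: vs.scale_right_distrib sum.distrib)
  also have "\<dots> = wsum k x + wsum k y"
    by (simp only: wsum_decomp[OF S(1) S(2)] wsum_decomp[OF S(1) S(3)])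
  finally show "wsum k (x + y) = wsum k x + wsum k y" .
next
  fix c x
  obtain S where S: "finite S" "x = sum (gcomps E x) S"
    by (rule decomp1)
  have "s c x = s c (sum (gcomps E x) S)" using S(2) by (rule arg_cong)
  also have "\<dots> = (\<Sum>h\<in>S. s c (gcomps E x h))" by (rule vs.scale_sum_right)
  finally have cx: "s c x = (\<Sum>h\<in>S. s c (gcomps E x h))" .
  have "wsum k (s c x) = (\<Sum>h\<in>S. s (k h) (s c (gcomps E x h)))"
    by (rule wsum_eq[OF S(1) _ cx]) (simp add: gcomps_props(2) E_scale)
  also have "\<dots> = s c (\<Sum>h\<in>S. s (k h) (gcomps E x h))"
    by (simp add: vs.scale_sum_right mult.commute)
  also have "\<dots> = s c (wsum k x)"
    by (simp only: wsum_decomp[OF S(1) S(2)])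
  finally show "wsum k (s c x) = s c (wsum k x)" .
qed

lemma wsum_comp: "wsum k1 (wsum k2 w) = wsum (\<lambda>h. k1 h * k2 h) w"
proof -
  obtain S where S: "finite S" "w = sum (gcomps E w) S" by (rule decomp1)
  have a: "wsum k2 w = (\<Sum>h\<in>S. s (k2 h) (gcomps E w h))" by (rule wsum_decomp[OF S])
  have "wsum k1 (wsum k2 w) = (\<Sum>h\<in>S. s (k1 h) (s (k2 h) (gcomps E w h)))"
    by (rule wsum_eq[OF S(1) _ a]) (simp add: gcomps_props(2) E_scale)
  also have "\<dots> = wsum (\<lambda>h. k1 h * k2 h) w" by (simp add: wsum_decomp[OF S])
  finally show ?thesis .
qed

lemma wsum_one: "wsum (\<lambda>_. 1) w = w"
proof -
  have "wsum (\<lambda>_. 1) w = sum (gcomps E w) {h. gcomps E w h \<noteq> 0}"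
    by (simp add: wsum_decomp[OF gcomps_props(1) gcomps_props(3)])
  also have "\<dots> = w" by (rule gcomps_props(3)[symmetric])
  finally show ?thesis .
qed

lemma gcomps_wsum: "gcomps E (wsum k w) h = s (k h) (gcomps E w h)"
proof -
  let ?S = "{h. gcomps E w h \<noteq> 0}"
  have "gcomps E (wsum k w) = (\<lambda>h. if h \<in> ?S then s (k h) (gcomps E w h) else 0)"
    by (rule gcomps_eq) (auto simp: wsum_def Let_def gcomps_props(1) gcomps_props(2) E_scale)
  then show ?thesis by auto
qed

end



lemma has_sum_diff':
  fixes f g :: "'a \<Rightarrow> complex"
  assumes "(f has_sum a) A" "(g has_sum b) A"
  shows "((\<lambda>x. f x - g x) has_sum (a - b)) A"
proof -
  have "((\<lambda>x. - g x) has_sum (- b)) A" using assms(2) by (simp add: has_sum_uminus)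
  from has_sum_add[OF assms(1) this] show ?thesis by simp
qed

lemma powser_zero_coeffs:
  fixes a :: "nat \<Rightarrow> complex"
  assumes r: "0 < r" and sm: "\<And>x. 0 < cmod x \<Longrightarrow> cmod x < r \<Longrightarrow> (\<lambda>n. a n * x ^ n) sums 0"
  shows "a k = 0"
proof (rule ccontr)
  assume ak: "a k \<noteq> 0"
  define b where "b n = (case n of 0 \<Rightarrow> 0 | Suc m \<Rightarrow> a m)" for n
  have bs: "(\<lambda>n. b n * (x - 0) ^ n) sums ((\<lambda>_. 0::complex) x)" if "norm (x - 0) < r" for x
  proof (cases "x = 0")
    case True
    have "\<And>n. b n * (x - 0) ^ n = 0" using True by (case_tac n) (simp_all add: b_def)
    then show ?thesis by (simp add: sums_0)
  next
    case False
    have "(\<lambda>n. x * (a n * x ^ n)) sums (x * 0)" using sm[of x] False that by (intro sums_mult) auto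
    then have "(\<lambda>n. b (Suc n) * x ^ Suc n) sums 0" by (simp add: b_def algebra_simps)
    then show ?thesis using sums_Suc_iff[of "\<lambda>n. b n * x ^ n" 0] by (simp add: b_def)
  qed
  have bk: "b (Suc k) \<noteq> 0" using ak by (simp add: b_def)
  show False
  proof (rule powser_0_nonzero[where a=b and \<xi>=0 and f="\<lambda>_. 0::complex" and m="Suc k" and r=r, OF r bs _ bk])
    fix s :: real assume s: "0 < s" and sz: "\<And>z::complex. z \<in> cball 0 s - {0} \<Longrightarrow> (\<lambda>_. 0::complex) z \<noteq> 0"
    have "complex_of_real s \<in> cball 0 s - {0}" using s by auto
    then show False using sz[of "complex_of_real s"] by simp
  qed auto
qed

lemma range_shift_int: "j \<notin> range (\<lambda>n::nat. N + int n) \<Longrightarrow> j < N"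
proof (rule ccontr)
  assume a: "j \<notin> range (\<lambda>n::nat. N + int n)" and "\<not> j < N"
  then have "j = N + int (nat (j - N))" by simp
  then show False using a by blast
qed

lemma laurent0_unique:
  assumes r: "0 < r" and L1: "laurent0 r g1 c1" and L2: "laurent0 r g2 c2"
    and eq: "\<And>x. 0 < cmod x \<Longrightarrow> cmod x < r \<Longrightarrow> g1 x = g2 x"
  shows "c1 = c2"
proof -
  obtain N1 where N1: "\<forall>j<N1. c1 j = 0" using L1 unfolding laurent0_def by blast
  obtain N2 where N2: "\<forall>j<N2. c2 j = 0" using L2 unfolding laurent0_def by blast
  define N where "N = min N1 N2"
  define e where "e j = c1 j - c2 j" for j
  have eN: "e j = 0" if "j < N" for j using N1 N2 that by (simp add: e_def N_def)
  have hs: "((\<lambda>j. e j * x powi j) has_sum 0) UNIV" if x: "0 < cmod x" "cmod x < r" for x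
  proof -
    have h1: "((\<lambda>j. c1 j * x powi j) has_sum g1 x) UNIV" using L1 x unfolding laurent0_def by blast
    have h2: "((\<lambda>j. c2 j * x powi j) has_sum g1 x) UNIV" using L2 x eq[OF x] unfolding laurent0_def by simp
    have "((\<lambda>j. c1 j * x powi j - c2 j * x powi j) has_sum (g1 x - g1 x)) UNIV" by (rule has_sum_diff'[OF h1 h2])
    then show ?thesis by (simp add: e_def left_diff_distrib)
  qed
  define a where "a n = e (N + int n)" for n
  have asum: "(\<lambda>n. a n * x ^ n) sums 0" if x: "0 < cmod x" "cmod x < r" for x
  proof -
    have x0: "x \<noteq> 0" using x by auto
    have "((\<lambda>j. e j * x powi j) has_sum 0) (range (\<lambda>n::nat. N + int n)) \<longleftrightarrow> ((\<lambda>j. e j * x powi j) has_sum 0) UNIV"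
      by (rule has_sum_cong_neutral) (auto simp: eN dest: range_shift_int)
    then have "((\<lambda>j. e j * x powi j) has_sum 0) (range (\<lambda>n::nat. N + int n))" using hs[OF x] by simp
    then have "(((\<lambda>j. e j * x powi j) \<circ> (\<lambda>n::nat. N + int n)) has_sum 0) UNIV"
      by (subst (asm) has_sum_reindex) (auto simp: inj_on_def)
    then have "((\<lambda>n. x powi (-N) * (e (N + int n) * x powi (N + int n))) has_sum (x powi (-N) * 0)) UNIV"
      unfolding comp_def by (rule has_sum_cmult_right)
    moreover have "x powi (-N) * (e (N + int n) * x powi (N + int n)) = a n * x ^ n" for n
    proof -
      have "x powi (N + int n) = x powi N * x ^ n" using x0 by (simp add: power_int_add)
      moreover have "x powi (-N) * x powi N = 1" using x0 by (simp add: power_int_minus)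
      ultimately show ?thesis by (simp add: a_def algebra_simps)
    qed
    ultimately have "((\<lambda>n. a n * x ^ n) has_sum 0) UNIV" by simp
    then show ?thesis by (rule has_sum_imp_sums)
  qed
  have a0: "a n = 0" for n by (rule powser_zero_coeffs[OF r asum])
  show "c1 = c2"
  proof
    fix j
    show "c1 j = c2 j"
    proof (cases "j < N")
      case True then show ?thesis using eN[OF True] by (simp add: e_def)
    next
      case False
      then have "j = N + int (nat (j - N))" by simp
      then have "e j = a (nat (j - N))" by (simp add: a_def)
      then show ?thesis using a0 by (simp add: e_def)
    qed
  qed
qed

lemma laurent0_exists:
  assumes r: "0 < r" and hol: "g holomorphic_on ball 0 r"
  shows "\<exists>c. laurent0 r (\<lambda>x. g x / x ^ e) c"
proof -
  define b where "b n = (deriv ^^ n) g 0 / fact n" for n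
  have bs: "(\<lambda>n. b n * x ^ n) sums g x" if "cmod x < r" for x
    using holomorphic_power_series[OF hol, of x] that by (simp add: b_def)
  have bh: "((\<lambda>n. b n * x ^ n) has_sum g x) UNIV" if x: "cmod x < r" for x
  proof -
    define x' where "x' = complex_of_real ((cmod x + r) / 2)"
    have nx: "cmod x' = \<bar>(cmod x + r) / 2\<bar>" unfolding x'_def by (rule norm_of_real)
    have a1: "cmod x' < r" "cmod x < cmod x'" using x r nx by auto
    have "summable (\<lambda>n. norm (b n * x ^ n))"
      by (rule powser_insidea[OF sums_summable[OF bs[OF a1(1)]] a1(2)])
    then show ?thesis using bs[OF x] by (rule norm_summable_imp_has_sum)
  qed
  define c where "c j = (if j \<ge> - int e then b (nat (j + int e)) else 0)" for j
  have "laurent0 r (\<lambda>x. g x / x ^ e) c"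
    unfolding laurent0_def
  proof (intro conjI allI impI exI[of _ "- int e"])
    fix j :: int assume "j < - int e" then show "c j = 0" by (simp add: c_def)
  next
    fix x :: complex assume x: "0 < cmod x \<and> cmod x < r"
    have x0: "x \<noteq> 0" using x by auto
    have "((\<lambda>n. inverse (x^e) * (b n * x ^ n)) has_sum (inverse (x^e) * g x)) UNIV"
      by (rule has_sum_cmult_right[OF bh]) (use x in auto)
    moreover have "inverse (x^e) * (b n * x ^ n) = c (int n - int e) * x powi (int n - int e)" for n
      using x0 by (simp add: c_def power_int_diff field_simps)
    ultimately have "((\<lambda>n. c (int n - int e) * x powi (int n - int e)) has_sum (g x / x ^ e)) UNIV"
      by (simp add: field_simps)
    then have "(((\<lambda>j. c j * x powi j) \<circ> (\<lambda>n::nat. int n - int e)) has_sum (g x / x ^ e)) UNIV"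
      by (simp add: comp_def)
    then have h: "((\<lambda>j. c j * x powi j) has_sum (g x / x ^ e)) (range (\<lambda>n::nat. int n - int e))"
      by (subst has_sum_reindex) (auto simp: inj_on_def)
    have "((\<lambda>j. c j * x powi j) has_sum (g x / x ^ e)) (range (\<lambda>n::nat. int n - int e)) \<longleftrightarrow>
          ((\<lambda>j. c j * x powi j) has_sum (g x / x ^ e)) UNIV"
    proof (rule has_sum_cong_neutral)
      fix j assume "j \<in> UNIV - range (\<lambda>n::nat. int n - int e)"
      then have "j < - int e"
        using range_shift_int[of j "- int e"] by (auto simp: image_iff)
      then show "c j * x powi j = 0" by (simp add: c_def)
    qed auto
    then show "((\<lambda>j. c j * x powi j) has_sum (g x / x ^ e)) UNIV" using h by simp
  qed
  then show ?thesis by blast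
qed



definition Dp :: "complex \<Rightarrow> nat \<Rightarrow> nat \<Rightarrow> complex poly" where
  "Dp z' a b = [:0,1:]^a * [:-z',1:]^b"

lemma poly_lin1: "poly [:-z', 1:] (x::complex) = x - z'" by (simp add: algebra_simps)

lemma poly_Dp: "poly (Dp z' a b) x = x^a * (x - z')^b"
  by (simp only: Dp_def poly_mult poly_power poly_lin1) simp

lemma ratP_unique:
  assumes f: "ratP z' f a b" and g: "ratP z' g a' b'"
    and eq: "\<And>x. cmod x > R \<Longrightarrow> f x = g x" and x: "x \<noteq> 0" "x \<noteq> z'"
  shows "f x = g x"
proof -
  obtain q where q: "\<forall>x. x \<noteq> 0 \<and> x \<noteq> z' \<longrightarrow> f x = poly q x / (x ^ a * (x - z') ^ b)"
    using f unfolding ratP_def by blast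
  obtain q' where q': "\<forall>x. x \<noteq> 0 \<and> x \<noteq> z' \<longrightarrow> g x = poly q' x / (x ^ a' * (x - z') ^ b')"
    using g unfolding ratP_def by blast
  define P where "P = q * Dp z' a' b' - q' * Dp z' a b"
  have key: "poly P y = 0 \<longleftrightarrow> f y = g y" if y: "y \<noteq> 0" "y \<noteq> z'" for y
  proof -
    have d1: "y ^ a * (y - z') ^ b \<noteq> 0" and d2: "y ^ a' * (y - z') ^ b' \<noteq> 0" using y by auto
    have "poly P y = poly q y * (y ^ a' * (y - z') ^ b') - poly q' y * (y ^ a * (y - z') ^ b)"
      by (simp add: P_def poly_Dp)
    moreover have "f y = poly q y / (y ^ a * (y - z') ^ b)" using q y by blast
    moreover have "g y = poly q' y / (y ^ a' * (y - z') ^ b')" using q' y by blast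
    ultimately show ?thesis by (simp add: frac_eq_eq[OF d1 d2])
  qed
  have P0: "P = 0"
  proof (rule ccontr)
    assume "P \<noteq> 0"
    then have fin: "finite {y. poly P y = 0}" by (rule poly_roots_finite)
    define M where "M = max (max R (cmod z')) 0 + 1"
    have M: "M > 0" "M > R" "M > cmod z'" by (auto simp: M_def)
    have "range (\<lambda>n::nat. complex_of_real (M + real n)) \<subseteq> {y. poly P y = 0}"
    proof clarify
      fix n :: nat
      let ?y = "complex_of_real (M + real n)"
      have ny: "cmod ?y = \<bar>M + real n\<bar>" by (rule norm_of_real)
      then have ny': "cmod ?y = M + real n" using M by simp
      have "?y \<noteq> 0" using ny' M by auto
      moreover have "?y \<noteq> z'" using ny' M by auto
      moreover have "cmod ?y > R" using ny' M by auto
      ultimately show "poly P ?y = 0" using key eq by blast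
    qed
    moreover have "infinite (range (\<lambda>n::nat. complex_of_real (M + real n)))"
      by (rule range_inj_infinite) (auto simp: inj_def)
    ultimately show False using fin finite_subset by blast
  qed
  show ?thesis using key[OF x] P0 by simp
qed

lemma ratP_mono: "ratP z' f a b \<Longrightarrow> ratP z' f (a + da) (b + db)"
proof -
  assume "ratP z' f a b"
  then obtain q where q: "\<forall>x. x \<noteq> 0 \<and> x \<noteq> z' \<longrightarrow> f x = poly q x / (x ^ a * (x - z') ^ b)"
    unfolding ratP_def by blast
  show ?thesis unfolding ratP_def
  proof (intro exI allI impI)
    fix x assume x: "x \<noteq> 0 \<and> x \<noteq> z'"
    then have nz: "x ^ da * (x - z') ^ db \<noteq> 0" by auto
    have "f x = poly q x / (x ^ a * (x - z') ^ b)" using q x by blast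
    also have "\<dots> = (poly q x * (x ^ da * (x - z') ^ db)) / ((x ^ a * (x - z') ^ b) * (x ^ da * (x - z') ^ db))"
      using nz by simp
    also have "\<dots> = poly (q * Dp z' da db) x / (x ^ (a + da) * (x - z') ^ (b + db))"
      by (simp add: poly_Dp power_add algebra_simps)
    finally show "f x = poly (q * Dp z' da db) x / (x ^ (a + da) * (x - z') ^ (b + db))" .
  qed
qed

lemma ratP_le: "ratP z' f a b \<Longrightarrow> a \<le> A \<Longrightarrow> b \<le> B \<Longrightarrow> ratP z' f A B"
  using ratP_mono[of z' f a b "A - a" "B - b"] by simp

lemma ratP_lin: "ratP z' f a b \<Longrightarrow> ratP z' g a b \<Longrightarrow> ratP z' (\<lambda>x. c * f x + g x) a b"
proof -
  assume "ratP z' f a b" "ratP z' g a b"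
  then obtain q q' where q: "\<forall>x. x \<noteq> 0 \<and> x \<noteq> z' \<longrightarrow> f x = poly q x / (x ^ a * (x - z') ^ b)"
    and q': "\<forall>x. x \<noteq> 0 \<and> x \<noteq> z' \<longrightarrow> g x = poly q' x / (x ^ a * (x - z') ^ b)"
    unfolding ratP_def by blast
  show ?thesis unfolding ratP_def
  proof (intro exI allI impI)
    fix x assume x: "x \<noteq> 0 \<and> x \<noteq> z'"
    show "c * f x + g x = poly (smult c q + q') x / (x ^ a * (x - z') ^ b)"
      using q x q' by (simp add: add_divide_distrib)
  qed
qed

lemma ratP_scale:
  assumes f: "ratP z1 f a b" and z: "z \<noteq> 0"
  shows "ratP (z * z1) (\<lambda>x. f (x / z)) a b"
proof -
  obtain q where q: "\<forall>x. x \<noteq> 0 \<and> x \<noteq> z1 \<longrightarrow> f x = poly q x / (x ^ a * (x - z1) ^ b)"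
    using f unfolding ratP_def by blast
  show ?thesis unfolding ratP_def
  proof (intro exI allI impI)
    fix x assume x: "x \<noteq> 0 \<and> x \<noteq> z * z1"
    have y: "x / z \<noteq> 0 \<and> x / z \<noteq> z1" using x z by (auto simp: field_simps)
    have e1: "(x / z) ^ a = x ^ a / z ^ a" by (simp add: power_divide)
    have "x / z - z1 = (x - z * z1) / z" using z by (simp add: field_simps)
    then have e2: "(x / z - z1) ^ b = (x - z * z1) ^ b / z ^ b" by (simp add: power_divide)
    have nz: "x ^ a * (x - z * z1) ^ b \<noteq> 0" using x by auto
    have "f (x / z) = poly q (x / z) / ((x / z) ^ a * (x / z - z1) ^ b)" using q y by blast
    also have "\<dots> = poly q (x / z) / (x ^ a * (x - z * z1) ^ b / z ^ (a + b))"
      by (simp add: e1 e2 power_add)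
    also have "\<dots> = z ^ (a + b) * poly q (x / z) / (x ^ a * (x - z * z1) ^ b)"
      using z nz by (simp add: field_simps)
    also have "z ^ (a + b) * poly q (x / z) = poly (smult (z ^ (a + b)) (pcompose q [:0, inverse z:])) x"
      by (simp add: poly_pcompose divide_inverse mult.commute)
    finally show "f (x / z) = poly (smult (z ^ (a + b)) (pcompose q [:0, inverse z:])) x / (x ^ a * (x - z * z1) ^ b)" .
  qed
qed

lemma conv_out_eq: "conv_out c z' f \<Longrightarrow> conv_out c z' g \<Longrightarrow> cmod x > cmod z' \<Longrightarrow> f x = g x"
  unfolding conv_out_def by (meson has_sum_unique)

lemma conv_out_lin:
  assumes "conv_out c1 z' f1" "conv_out c2 z' f2" "conv_out c3 z' f3"
    and c3: "\<And>j. c3 j = \<alpha> * c1 j + c2 j" and x: "cmod x > cmod z'"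
  shows "f3 x = \<alpha> * f1 x + f2 x"
proof -
  have h1: "((\<lambda>j. c1 j * x powi j) has_sum f1 x) UNIV" using assms(1) x unfolding conv_out_def by blast
  have h2: "((\<lambda>j. c2 j * x powi j) has_sum f2 x) UNIV" using assms(2) x unfolding conv_out_def by blast
  have h3: "((\<lambda>j. c3 j * x powi j) has_sum f3 x) UNIV" using assms(3) x unfolding conv_out_def by blast
  have "((\<lambda>j. \<alpha> * (c1 j * x powi j) + c2 j * x powi j) has_sum (\<alpha> * f1 x + f2 x)) UNIV"
    by (intro has_sum_add has_sum_cmult_right h1 h2)
  moreover have "(\<lambda>j. \<alpha> * (c1 j * x powi j) + c2 j * x powi j) = (\<lambda>j. c3 j * x powi j)"
    by (simp add: c3 algebra_simps)
  ultimately show ?thesis using h3 has_sum_unique by metis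
qed

lemma conv_out_scale:
  assumes co: "conv_out c z1 f" and z: "z \<noteq> 0"
  shows "conv_out (\<lambda>j. c j / z powi j) (z * z1) (\<lambda>x. f (x / z))"
  unfolding conv_out_def
proof (intro allI impI)
  fix x assume x: "cmod (z * z1) < cmod x"
  have "cmod z1 < cmod (x / z)" using x z by (simp add: norm_mult norm_divide field_simps)
  then have a: "(\<lambda>j. norm (c j * (x / z) powi j)) summable_on UNIV \<and> ((\<lambda>j. c j * (x / z) powi j) has_sum f (x / z)) UNIV"
    using co unfolding conv_out_def by blast
  have e: "\<And>j. c j / z powi j * x powi j = c j * (x / z) powi j"
    by (simp add: power_int_divide_distrib)
  show "(\<lambda>j. norm (c j / z powi j * x powi j)) summable_on UNIV \<and>
        ((\<lambda>j. c j / z powi j * x powi j) has_sum f (x / z)) UNIV"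
    using a by (simp only: e)
qed

lemma laurent0_cong:
  "laurent0 r g c \<Longrightarrow> (\<And>x. 0 < cmod x \<Longrightarrow> cmod x < r \<Longrightarrow> g x = g' x) \<Longrightarrow> laurent0 r g' c"
  unfolding laurent0_def by auto

lemma laurent0_lin:
  assumes L1: "laurent0 r g1 c1" and L2: "laurent0 r g2 c2"
  shows "laurent0 r (\<lambda>x. \<alpha> * g1 x + g2 x) (\<lambda>j. \<alpha> * c1 j + c2 j)"
proof -
  obtain N1 where N1: "\<forall>j<N1. c1 j = 0" using L1 unfolding laurent0_def by blast
  obtain N2 where N2: "\<forall>j<N2. c2 j = 0" using L2 unfolding laurent0_def by blast
  show ?thesis unfolding laurent0_def
  proof (intro conjI allI impI exI[of _ "min N1 N2"])
    fix j :: int assume "j < min N1 N2" then show "\<alpha> * c1 j + c2 j = 0" using N1 N2 by simp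
  next
    fix x :: complex assume x: "0 < cmod x \<and> cmod x < r"
    have h1: "((\<lambda>j. c1 j * x powi j) has_sum g1 x) UNIV" using L1 x unfolding laurent0_def by blast
    have h2: "((\<lambda>j. c2 j * x powi j) has_sum g2 x) UNIV" using L2 x unfolding laurent0_def by blast
    have "((\<lambda>j. \<alpha> * (c1 j * x powi j) + c2 j * x powi j) has_sum (\<alpha> * g1 x + g2 x)) UNIV"
      by (intro has_sum_add has_sum_cmult_right h1 h2)
    moreover have "(\<lambda>j. \<alpha> * (c1 j * x powi j) + c2 j * x powi j) = (\<lambda>j. (\<alpha> * c1 j + c2 j) * x powi j)"
      by (simp add: algebra_simps)
    ultimately show "((\<lambda>j. (\<alpha> * c1 j + c2 j) * x powi j) has_sum (\<alpha> * g1 x + g2 x)) UNIV" by simp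
  qed
qed

lemma laurent0_scale:
  assumes L: "laurent0 r g c" and z: "z \<noteq> 0"
  shows "laurent0 (cmod z * r) (\<lambda>x. g (x / z)) (\<lambda>j. c j / z powi j)"
proof -
  obtain N where N: "\<forall>j<N. c j = 0" using L unfolding laurent0_def by blast
  show ?thesis unfolding laurent0_def
  proof (intro conjI allI impI exI[of _ N])
    fix j :: int assume "j < N" then show "c j / z powi j = 0" using N by simp
  next
    fix x :: complex assume x: "0 < cmod x \<and> cmod x < cmod z * r"
    have "0 < cmod (x / z) \<and> cmod (x / z) < r" using x z by (simp add: norm_divide field_simps)
    then have h: "((\<lambda>j. c j * (x / z) powi j) has_sum g (x / z)) UNIV" using L unfolding laurent0_def by blast
    have e: "(\<lambda>j. c j / z powi j * x powi j) = (\<lambda>j. c j * (x / z) powi j)"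
      by (simp add: power_int_divide_distrib)
    show "((\<lambda>j. c j / z powi j * x powi j) has_sum g (x / z)) UNIV" using h by (simp only: e)
  qed
qed

definition LC :: "complex \<Rightarrow> complex \<Rightarrow> (int \<Rightarrow> complex) \<Rightarrow> (int \<Rightarrow> complex) \<Rightarrow> bool" where
  "LC z' s Yc c \<longleftrightarrow> (\<exists>f. conv_out Yc z' f \<and> (\<exists>a b. ratP z' f a b) \<and> laurent0 (cmod z') (\<lambda>x. f (x + s)) c)"

lemma shift_ok:
  fixes x s z' :: complex
  assumes "s = 0 \<or> s = z'" "0 < cmod x" "cmod x < cmod z'"
  shows "x + s \<noteq> 0 \<and> x + s \<noteq> z'"
  using assms
proof (elim disjE)
  assume "s = 0" then show ?thesis using assms by auto
next
  assume s: "s = z'"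
  have "x + z' \<noteq> 0"
  proof
    assume "x + z' = 0" then have "x = - z'" by (simp add: add_eq_0_iff)
    then show False using assms by simp
  qed
  then show ?thesis using s assms by auto
qed

lemma LC_unique:
  assumes z': "z' \<noteq> 0" and s: "s = 0 \<or> s = z'" and L1: "LC z' s Yc c1" and L2: "LC z' s Yc c2"
  shows "c1 = c2"
proof -
  obtain f1 a1 b1 where f1: "conv_out Yc z' f1" "ratP z' f1 a1 b1" "laurent0 (cmod z') (\<lambda>x. f1 (x + s)) c1"
    using L1 unfolding LC_def by blast
  obtain f2 a2 b2 where f2: "conv_out Yc z' f2" "ratP z' f2 a2 b2" "laurent0 (cmod z') (\<lambda>x. f2 (x + s)) c2"
    using L2 unfolding LC_def by blast
  have eq: "f1 y = f2 y" if "y \<noteq> 0" "y \<noteq> z'" for y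
    by (rule ratP_unique[OF f1(2) f2(2) conv_out_eq[OF f1(1) f2(1)] that])
  show ?thesis
  proof (rule laurent0_unique[OF _ f1(3) f2(3)])
    show "0 < cmod z'" using z' by simp
    fix x :: complex assume "0 < cmod x" "cmod x < cmod z'"
    then show "f1 (x + s) = f2 (x + s)" using shift_ok[OF s] eq by blast
  qed
qed

lemma LC_exists:
  assumes z': "z' \<noteq> 0" and s: "s = 0 \<or> s = z'" and co: "conv_out Yc z' f" and ra: "ratP z' f a b"
  shows "\<exists>c. LC z' s Yc c"
proof -
  obtain q where q: "\<forall>x. x \<noteq> 0 \<and> x \<noteq> z' \<longrightarrow> f x = poly q x / (x ^ a * (x - z') ^ b)"
    using ra unfolding ratP_def by blast
  have r: "0 < cmod z'" using z' by simp
  have "\<exists>c. laurent0 (cmod z') (\<lambda>x. f (x + s)) c"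
    using s
  proof (elim disjE)
    assume s0: "s = 0"
    define g where "g x = poly q x / (x - z') ^ b" for x
    have "g holomorphic_on ball 0 (cmod z')"
      unfolding g_def by (intro holomorphic_intros) (auto simp: dist_norm)
    then obtain c where c: "laurent0 (cmod z') (\<lambda>x. g x / x ^ a) c"
      using laurent0_exists[OF r] by blast
    have "laurent0 (cmod z') (\<lambda>x. f (x + s)) c"
    proof (rule laurent0_cong[OF c])
      fix x :: complex assume x: "0 < cmod x" "cmod x < cmod z'"
      then have "x \<noteq> 0" "x \<noteq> z'" by auto
      then show "g x / x ^ a = f (x + s)" using q s0 by (simp add: g_def field_simps)
    qed
    then show ?thesis by blast
  next
    assume s1: "s = z'"
    define g where "g x = poly q (x + z') / (x + z') ^ a" for x
    have "g holomorphic_on ball 0 (cmod z')"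
      unfolding g_def
    proof (intro holomorphic_intros)
      fix x :: complex assume "x \<in> ball 0 (cmod z')"
      then have "x + z' \<noteq> 0" using shift_ok[of z' z' x] by (cases "x = 0") (auto simp: dist_norm)
      then show "(x + z') ^ a \<noteq> 0" by simp
    qed
    then obtain c where c: "laurent0 (cmod z') (\<lambda>x. g x / x ^ b) c"
      using laurent0_exists[OF r] by blast
    have "laurent0 (cmod z') (\<lambda>x. f (x + s)) c"
    proof (rule laurent0_cong[OF c])
      fix x :: complex assume x: "0 < cmod x" "cmod x < cmod z'"
      then have ne: "x + z' \<noteq> 0 \<and> x + z' \<noteq> z'" using shift_ok[of z' z' x] by blast
      then have "f (x + z') = poly q (x + z') / ((x + z') ^ a * x ^ b)" using q by simp
      then show "g x / x ^ b = f (x + s)" using s1 by (simp add: g_def field_simps)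
    qed
    then show ?thesis by blast
  qed
  then show ?thesis using co ra unfolding LC_def by blast
qed

lemma LC_lin:
  assumes z': "z' \<noteq> 0" and s: "s = 0 \<or> s = z'" and L1: "LC z' s Y1 c1" and L2: "LC z' s Y2 c2"
    and co: "conv_out Y3 z' f3" and ra: "ratP z' f3 a3 b3" and Y3: "\<And>j. Y3 j = \<alpha> * Y1 j + Y2 j"
  shows "LC z' s Y3 (\<lambda>j. \<alpha> * c1 j + c2 j)"
proof -
  obtain f1 a1 b1 where f1: "conv_out Y1 z' f1" "ratP z' f1 a1 b1" "laurent0 (cmod z') (\<lambda>x. f1 (x + s)) c1"
    using L1 unfolding LC_def by blast
  obtain f2 a2 b2 where f2: "conv_out Y2 z' f2" "ratP z' f2 a2 b2" "laurent0 (cmod z') (\<lambda>x. f2 (x + s)) c2"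
    using L2 unfolding LC_def by blast
  have r1: "ratP z' f1 (max a1 a2) (max b1 b2)" by (rule ratP_le[OF f1(2)]) auto
  have r2: "ratP z' f2 (max a1 a2) (max b1 b2)" by (rule ratP_le[OF f2(2)]) auto
  have r12: "ratP z' (\<lambda>x. \<alpha> * f1 x + f2 x) (max a1 a2) (max b1 b2)" by (rule ratP_lin[OF r1 r2])
  have eq: "f3 y = \<alpha> * f1 y + f2 y" if "y \<noteq> 0" "y \<noteq> z'" for y
    using ratP_unique[OF ra r12 conv_out_lin[OF f1(1) f2(1) co Y3] that] .
  have "laurent0 (cmod z') (\<lambda>x. \<alpha> * f1 (x + s) + f2 (x + s)) (\<lambda>j. \<alpha> * c1 j + c2 j)"
    by (rule laurent0_lin[OF f1(3) f2(3)])
  then have "laurent0 (cmod z') (\<lambda>x. f3 (x + s)) (\<lambda>j. \<alpha> * c1 j + c2 j)"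
  proof (rule laurent0_cong)
    fix x :: complex assume "0 < cmod x" "cmod x < cmod z'"
    then show "\<alpha> * f1 (x + s) + f2 (x + s) = f3 (x + s)" using shift_ok[OF s] eq by metis
  qed
  then show ?thesis using co ra unfolding LC_def by blast
qed

lemma LC_scale:
  assumes z: "z \<noteq> 0" and L: "LC z1 s Yc c"
  shows "LC (z * z1) (z * s) (\<lambda>j. Yc j / z powi j) (\<lambda>j. c j / z powi j)"
proof -
  obtain f a b where f: "conv_out Yc z1 f" "ratP z1 f a b" "laurent0 (cmod z1) (\<lambda>x. f (x + s)) c"
    using L unfolding LC_def by blast
  have "laurent0 (cmod z * cmod z1) (\<lambda>x. f (x / z + s)) (\<lambda>j. c j / z powi j)"
    using laurent0_scale[OF f(3) z] by simp
  then have "laurent0 (cmod (z * z1)) (\<lambda>x. f ((x + z * s) / z)) (\<lambda>j. c j / z powi j)"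
    using z by (simp add: norm_mult add_divide_distrib)
  then show ?thesis unfolding LC_def
    using conv_out_scale[OF f(1) z] ratP_scale[OF f(2) z] by blast
qed



lemma sum_lt_2: "2 \<le> (K::nat) \<Longrightarrow> (\<And>i. i \<ge> 2 \<Longrightarrow> f i = (0::'a::comm_monoid_add)) \<Longrightarrow> sum f {..<K} = f 0 + f 1"
proof -
  assume K: "2 \<le> K" and z: "\<And>i. i \<ge> 2 \<Longrightarrow> f i = 0"
  have "sum f {..<K} = sum f {..<2}"
    by (rule sum.mono_neutral_right) (use K z in auto)
  also have "{..<2::nat} = {0,1}" by auto
  finally show ?thesis by simp
qed

lemma sum_lt_1: "1 \<le> (K::nat) \<Longrightarrow> (\<And>i. i \<ge> 1 \<Longrightarrow> f i = (0::'a::comm_monoid_add)) \<Longrightarrow> sum f {..<K} = f 0"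
proof -
  assume K: "1 \<le> K" and z: "\<And>i. i \<ge> 1 \<Longrightarrow> f i = 0"
  have "sum f {..<K} = sum f {..<1}"
    by (rule sum.mono_neutral_right) (use K z in auto)
  then show ?thesis by simp
qed

locale vmod =
  fixes sV :: "complex \<Rightarrow> 'v::ab_group_add \<Rightarrow> 'v" and Y :: "'v \<Rightarrow> int \<Rightarrow> 'v \<Rightarrow> 'v"
    and one \<omega> :: 'v
    and sW :: "complex \<Rightarrow> 'w::ab_group_add \<Rightarrow> 'w" and YW :: "'v \<Rightarrow> int \<Rightarrow> 'w \<Rightarrow> 'w"
  assumes VOA: "is_VOA sV Y one \<omega>" and MOD: "is_module sV Y one \<omega> sW YW"
begin

lemma vsV: "vector_space sV" using VOA by (simp add: is_VOA_def)
lemma vsW: "vector_space sW" using MOD by (simp add: is_module_def)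
lemma linYv: "Vector_Spaces.linear sV sW (\<lambda>v. YW v n w)"
  using MOD by (simp add: is_module_def bilinear_modes_def)
lemma linYw: "Vector_Spaces.linear sW sW (YW v n)"
  using MOD by (simp add: is_module_def bilinear_modes_def)
lemma linVv: "Vector_Spaces.linear sV sV (\<lambda>u. Y u n v)"
  using VOA by (simp add: is_VOA_def bilinear_modes_def)
lemma linVw: "Vector_Spaces.linear sV sV (Y u n)"
  using VOA by (simp add: is_VOA_def bilinear_modes_def)
lemma truncV: "mode_trunc Y" using VOA by (simp add: is_VOA_def)
lemma truncW: "mode_trunc YW" using MOD by (simp add: is_module_def)
lemma jacV: "jacobi Y Y sV" using VOA by (simp add: is_VOA_def)
lemma jacW: "jacobi Y YW sW" using MOD by (simp add: is_module_def)
lemma vacW: "YW one n w = (if n = -1 then w else 0)" using MOD by (simp add: is_module_def)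
lemma vacV1: "n \<ge> 0 \<Longrightarrow> Y v n one = 0" using VOA by (simp add: is_VOA_def)
lemma vacV2: "Y v (-1) one = v" using VOA by (simp add: is_VOA_def)
lemma Lm1V: "Y (Y \<omega> 0 v) n w = sV (- of_int n) (Y v (n - 1) w)" using VOA by (simp add: is_VOA_def)
lemma dirV: "is_dirsum (Vgr sV Y \<omega>)" using VOA by (simp add: is_VOA_def)
lemma dirW: "is_dirsum (Wgr sW YW \<omega>)" using MOD by (simp add: is_module_def)
lemma vir: "\<exists>c::complex. \<forall>m n v. Y \<omega> (m+1) (Y \<omega> (n+1) v) - Y \<omega> (n+1) (Y \<omega> (m+1) v)
         = sV (of_int (m - n)) (Y \<omega> (m+n+1) v)
           + (if m + n = 0 then sV ((of_int m ^ 3 - of_int m) / 12 * c) v else 0)"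
  using VOA by (simp add: is_VOA_def)

sublocale V: eigdec sV "Y \<omega> 1" "of_int" "Vgr sV Y \<omega>"
  by (intro eigdec.intro) (auto simp: vsV linVw inj_def Vgr_def dirV)

sublocale W: eigdec sW "YW \<omega> 1" "\<lambda>h. h" "Wgr sW YW \<omega>"
  by (intro eigdec.intro) (auto simp: vsW linYw inj_def Wgr_def dirW)

lemma Ym2: "Y \<omega> 0 v = Y v (-2) one"
proof -
  have "Y (Y \<omega> 0 v) (-1) one = sV 1 (Y v (-2) one)" using Lm1V[of v "-1" one] by simp
  then show ?thesis using vacV2 V.vs.scale_one by simp
qed

lemma LW_m1: "YW (Y \<omega> 0 v) (n + 1) w = sW (- (of_int n + 1)) (YW v n w)"
proof -
  obtain N where N: "\<forall>p\<ge>N. YW v p w = 0" using truncW unfolding mode_trunc_def by blast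
  define K where "K = nat (max 2 (N - n - 2))"
  have K2: "2 \<le> K" unfolding K_def by simp
  have hyp: "\<forall>i\<ge>K. Y v (-2 + int i) one = 0 \<and> YW one (-1 + int i) w = 0 \<and> YW v (n + 2 + int i) w = 0"
    using N vacV1 vacW unfolding K_def by auto
  have J: "(\<Sum>i<K. sW (of_int (n + 2) gchoose i) (YW (Y v (-2 + int i) one) (n + 2 + -1 - int i) w))
     = (\<Sum>i<K. sW ((-1)^i * (of_int (-2) gchoose i)) (YW v (-2 + (n + 2) - int i) (YW one (-1 + int i) w))
              - sW ((-1)^i * (-1) powi (-2) * (of_int (-2) gchoose i)) (YW one (-2 + -1 - int i) (YW v (n + 2 + int i) w)))"
    using jacW hyp unfolding jacobi_def by blast
  have L: "(\<Sum>i<K. sW (of_int (n + 2) gchoose i) (YW (Y v (-2 + int i) one) (n + 2 + -1 - int i) w))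
     = YW (Y v (-2) one) (n + 1) w + sW (of_int n + 2) (YW v n w)"
  proof (subst sum_lt_2[OF K2])
    fix i :: nat assume "2 \<le> i"
    then have "Y v (-2 + int i) one = 0" using vacV1 by simp
    then show "sW (of_int (n + 2) gchoose i) (YW (Y v (-2 + int i) one) (n + 2 + -1 - int i) w) = 0"
      using lin_0[OF linYv] W.vs.scale_zero_right by simp
  next
    show "sW (of_int (n + 2) gchoose 0) (YW (Y v (-2 + int 0) one) (n + 2 + -1 - int 0) w) +
      sW (of_int (n + 2) gchoose 1) (YW (Y v (-2 + int 1) one) (n + 2 + -1 - int 1) w) =
      YW (Y v (-2) one) (n + 1) w + sW (of_int n + 2) (YW v n w)"
      by (simp add: vacV2 add.commute)
  qed
  have R: "(\<Sum>i<K. sW ((-1)^i * (of_int (-2) gchoose i)) (YW v (-2 + (n + 2) - int i) (YW one (-1 + int i) w))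
              - sW ((-1)^i * (-1) powi (-2) * (of_int (-2) gchoose i)) (YW one (-2 + -1 - int i) (YW v (n + 2 + int i) w)))
     = YW v n w"
  proof (subst sum_lt_1)
    show "1 \<le> K" using K2 by simp
    fix i :: nat assume "1 \<le> i"
    then show "sW ((-1)^i * (of_int (-2) gchoose i)) (YW v (-2 + (n + 2) - int i) (YW one (-1 + int i) w))
              - sW ((-1)^i * (-1) powi (-2) * (of_int (-2) gchoose i)) (YW one (-2 + -1 - int i) (YW v (n + 2 + int i) w)) = 0"
      using lin_0[OF linYw] by (simp add: vacW)
  next
    show "sW ((-1)^0 * (of_int (-2) gchoose 0)) (YW v (-2 + (n + 2) - int 0) (YW one (-1 + int 0) w))
              - sW ((-1)^0 * (-1) powi (-2) * (of_int (-2) gchoose 0)) (YW one (-2 + -1 - int 0) (YW v (n + 2 + int 0) w)) = YW v n w"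
      by (simp add: vacW)
  qed
  have "YW (Y v (-2) one) (n + 1) w = YW v n w - sW (of_int n + 2) (YW v n w)"
    using J L R by (simp add: eq_diff_eq)
  also have "\<dots> = sW (- (of_int n + 1)) (YW v n w)"
  proof -
    have "YW v n w - sW (of_int n + 2) (YW v n w) = sW (1 - (of_int n + 2)) (YW v n w)"
      by (simp only: W.vs.scale_left_diff_distrib W.vs.scale_one)
    also have "(1 - (of_int n + 2) :: complex) = - (of_int n + 1)" by simp
    finally show ?thesis .
  qed
  finally show ?thesis using Ym2 by simp
qed

lemma comm_L0: "YW \<omega> 1 (YW v n w) - YW v n (YW \<omega> 1 w) = YW (Y \<omega> 0 v) (n + 1) w + YW (Y \<omega> 1 v) n w"
proof -
  obtain N1 where N1: "\<forall>p\<ge>N1. Y \<omega> p v = 0" using truncV unfolding mode_trunc_def by blast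
  obtain N2 where N2: "\<forall>p\<ge>N2. YW v p w = 0" using truncW unfolding mode_trunc_def by blast
  obtain N3 where N3: "\<forall>p\<ge>N3. YW \<omega> p w = 0" using truncW unfolding mode_trunc_def by blast
  define K where "K = nat (max (max 2 N1) (max (N2 - n) (N3 - 1)))"
  have K2: "2 \<le> K" unfolding K_def by simp
  have hyp: "\<forall>i\<ge>K. Y \<omega> (0 + int i) v = 0 \<and> YW v (n + int i) w = 0 \<and> YW \<omega> (1 + int i) w = 0"
    using N1 N2 N3 unfolding K_def by auto
  have J: "(\<Sum>i<K. sW (of_int 1 gchoose i) (YW (Y \<omega> (0 + int i) v) (1 + n - int i) w))
     = (\<Sum>i<K. sW ((-1)^i * (of_int 0 gchoose i)) (YW \<omega> (0 + 1 - int i) (YW v (n + int i) w))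
              - sW ((-1)^i * (-1) powi 0 * (of_int 0 gchoose i)) (YW v (0 + n - int i) (YW \<omega> (1 + int i) w)))"
    using jacW hyp unfolding jacobi_def by blast
  have g1: "(of_int 1 gchoose i :: complex) = 0" if "i \<ge> 2" for i
  proof -
    have "(of_int 1 gchoose i :: complex) = of_nat (1 choose i)"
      by (metis binomial_gbinomial of_int_1 of_nat_1)
    then show ?thesis using that by simp
  qed
  have L: "(\<Sum>i<K. sW (of_int 1 gchoose i) (YW (Y \<omega> (0 + int i) v) (1 + n - int i) w))
     = YW (Y \<omega> 0 v) (n + 1) w + YW (Y \<omega> 1 v) n w"
  proof (subst sum_lt_2[OF K2])
    fix i :: nat assume "2 \<le> i"
    then show "sW (of_int 1 gchoose i) (YW (Y \<omega> (0 + int i) v) (1 + n - int i) w) = 0"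
      using g1 by simp
  next
    show "sW (of_int 1 gchoose 0) (YW (Y \<omega> (0 + int 0) v) (1 + n - int 0) w) +
      sW (of_int 1 gchoose 1) (YW (Y \<omega> (0 + int 1) v) (1 + n - int 1) w) =
      YW (Y \<omega> 0 v) (n + 1) w + YW (Y \<omega> 1 v) n w"
      by (simp add: add.commute)
  qed
  have R: "(\<Sum>i<K. sW ((-1)^i * (of_int 0 gchoose i)) (YW \<omega> (0 + 1 - int i) (YW v (n + int i) w))
              - sW ((-1)^i * (-1) powi 0 * (of_int 0 gchoose i)) (YW v (0 + n - int i) (YW \<omega> (1 + int i) w)))
     = YW \<omega> 1 (YW v n w) - YW v n (YW \<omega> 1 w)"
  proof (subst sum_lt_1)
    show "1 \<le> K" using K2 by simp
    fix i :: nat assume "1 \<le> i"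
    then show "sW ((-1)^i * (of_int 0 gchoose i)) (YW \<omega> (0 + 1 - int i) (YW v (n + int i) w))
              - sW ((-1)^i * (-1) powi 0 * (of_int 0 gchoose i)) (YW v (0 + n - int i) (YW \<omega> (1 + int i) w)) = 0"
      by (simp add: gbinomial_0_left)
  next
    show "sW ((-1)^0 * (of_int 0 gchoose 0)) (YW \<omega> (0 + 1 - int 0) (YW v (n + int 0) w))
              - sW ((-1)^0 * (-1) powi 0 * (of_int 0 gchoose 0)) (YW v (0 + n - int 0) (YW \<omega> (1 + int 0) w)) =
          YW \<omega> 1 (YW v n w) - YW v n (YW \<omega> 1 w)"
      by simp
  qed
  show ?thesis using J L R by simp
qed

lemma YW_weight:
  assumes v: "v \<in> Vgr sV Y \<omega> k" and w: "w \<in> Wgr sW YW \<omega> h"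
  shows "YW v n w \<in> Wgr sW YW \<omega> (h + of_int k - of_int n - 1)"
proof -
  have v1: "Y \<omega> 1 v = sV (of_int k) v" using v by (simp add: Vgr_def)
  have w1: "YW \<omega> 1 w = sW h w" using w by (simp add: Wgr_def)
  have "YW \<omega> 1 (YW v n w) = YW v n (YW \<omega> 1 w) + (YW (Y \<omega> 0 v) (n + 1) w + YW (Y \<omega> 1 v) n w)"
    using comm_L0[of v n w] by (simp add: diff_eq_eq add.commute)
  also have "\<dots> = sW h (YW v n w) + (sW (- (of_int n + 1)) (YW v n w) + sW (of_int k) (YW v n w))"
    by (simp add: w1 v1 LW_m1 lin_scale[OF linYw] lin_scale[OF linYv])
  also have "\<dots> = sW (h + (- (of_int n + 1) + of_int k)) (YW v n w)"
    by (simp only: W.vs.scale_left_distrib)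
  also have "h + (- (of_int n + 1) + of_int k) = h + of_int k - of_int n - 1" by simp
  finally show ?thesis by (simp add: Wgr_def)
qed

lemma L1_weight:
  assumes v: "v \<in> Vgr sV Y \<omega> k"
  shows "Y \<omega> 2 v \<in> Vgr sV Y \<omega> (k - 1)"
proof -
  obtain c where c: "\<forall>m n v. Y \<omega> (m+1) (Y \<omega> (n+1) v) - Y \<omega> (n+1) (Y \<omega> (m+1) v)
         = sV (of_int (m - n)) (Y \<omega> (m+n+1) v)
           + (if m + n = 0 then sV ((of_int m ^ 3 - of_int m) / 12 * c) v else 0)"
    using vir by blast
  have "Y \<omega> (0+1) (Y \<omega> (1+1) v) - Y \<omega> (1+1) (Y \<omega> (0+1) v) = sV (of_int (0 - 1)) (Y \<omega> (0+1+1) v)"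
    using c[rule_format, of 0 1 v] by simp
  then have e: "Y \<omega> 1 (Y \<omega> 2 v) - Y \<omega> 2 (Y \<omega> 1 v) = sV (-1) (Y \<omega> 2 v)" by simp
  have v1: "Y \<omega> 1 v = sV (of_int k) v" using v by (simp add: Vgr_def)
  have "Y \<omega> 1 (Y \<omega> 2 v) = sV (of_int k) (Y \<omega> 2 v) + sV (-1) (Y \<omega> 2 v)"
    using e by (simp add: v1 lin_scale[OF linVw] diff_eq_eq add.commute)
  also have "\<dots> = sV (of_int (k - 1)) (Y \<omega> 2 v)"
    by (simp add: V.vs.scale_left_diff_distrib)
  finally show ?thesis by (simp add: Vgr_def)
qed

lemma L1_pow_weight:
  "v \<in> Vgr sV Y \<omega> k \<Longrightarrow> (Y \<omega> 2 ^^ i) v \<in> Vgr sV Y \<omega> (k - int i)"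
proof (induct i)
  case 0 then show ?case by simp
next
  case (Suc i)
  then have "Y \<omega> 2 ((Y \<omega> 2 ^^ i) v) \<in> Vgr sV Y \<omega> (k - int i - 1)" using L1_weight by blast
  then show ?case by (simp add: algebra_simps)
qed

lemma L1_pow_scale: "(Y \<omega> 2 ^^ i) (sV a v) = sV a ((Y \<omega> 2 ^^ i) v)"
  by (induct i) (simp_all add: lin_scale[OF linVw])

definition Tl :: "complex \<Rightarrow> 'w \<Rightarrow> 'w" where
  "Tl l = W.wsum (\<lambda>h. exp (h * l))"

lemma Tl_linear: "Vector_Spaces.linear sW sW (Tl l)"
  unfolding Tl_def by (rule W.wsum_linear)

lemma Tl_hom: "x \<in> Wgr sW YW \<omega> \<mu> \<Longrightarrow> Tl l x = sW (exp (\<mu> * l)) x"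
  unfolding Tl_def by (rule W.wsum_hom)

lemma Tl_comp: "Tl l1 (Tl l2 w) = Tl (l1 + l2) w"
  unfolding Tl_def W.wsum_comp by (simp add: distrib_left exp_add)

lemma Tl_0: "Tl 0 w = w"
  unfolding Tl_def using W.wsum_one by simp

lemma Tl_YW:
  assumes u: "u \<in> Vgr sV Y \<omega> k"
  shows "Tl l (YW u m w) = sW (exp ((of_int k - of_int m - 1) * l)) (YW u m (Tl l w))"
proof -
  obtain S where S: "finite S" "w = sum (gcomps (Wgr sW YW \<omega>) w) S" by (rule W.decomp1)
  let ?c = "gcomps (Wgr sW YW \<omega>) w"
  have "YW u m w = YW u m (sum ?c S)" using S(2) by (rule arg_cong)
  also have "\<dots> = (\<Sum>h\<in>S. YW u m (?c h))" by (rule lin_sum[OF linYw])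
  finally have e1: "YW u m w = (\<Sum>h\<in>S. YW u m (?c h))" .
  have "Tl l (YW u m w) = (\<Sum>h\<in>S. Tl l (YW u m (?c h)))"
    by (simp only: e1 lin_sum[OF Tl_linear])
  also have "\<dots> = (\<Sum>h\<in>S. sW (exp ((h + of_int k - of_int m - 1) * l)) (YW u m (?c h)))"
    by (rule sum.cong[OF refl], rule Tl_hom, rule YW_weight[OF u W.gcomps_props(2)])
  also have "\<dots> = (\<Sum>h\<in>S. sW (exp ((of_int k - of_int m - 1) * l)) (sW (exp (h * l)) (YW u m (?c h))))"
    by (simp add: exp_add[symmetric] algebra_simps)
  also have "\<dots> = sW (exp ((of_int k - of_int m - 1) * l)) (YW u m (\<Sum>h\<in>S. sW (exp (h * l)) (?c h)))"
    by (simp add: W.vs.scale_sum_right lin_sum[OF linYw] lin_scale[OF linYw])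
  also have "(\<Sum>h\<in>S. sW (exp (h * l)) (?c h)) = Tl l w"
    unfolding Tl_def by (rule W.wsum_decomp[OF S, symmetric])
  finally show ?thesis .
qed

end



lemma exp_lp: assumes "z \<noteq> 0" shows "exp (lp p z) = z"
proof -
  have a: "arg0 z = Arg2pi z" using assms unfolding arg0_def Arg2pi_def is_Arg_def by simp
  have "exp (logc z) = z"
  proof -
    have "exp (logc z) = exp (complex_of_real (ln (cmod z))) * exp (\<i> * complex_of_real (Arg2pi z))"
      unfolding logc_def a by (simp add: exp_add)
    also have "exp (complex_of_real (ln (cmod z))) = complex_of_real (cmod z)"
      using assms by (simp add: exp_of_real)
    also have "complex_of_real (cmod z) * exp (\<i> * complex_of_real (Arg2pi z)) = z"
      using Arg2pi[of z] unfolding is_Arg_def by simp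
    finally show ?thesis .
  qed
  moreover have "exp (2 * of_int p * of_real pi * \<i>) = (1::complex)"
    using exp_integer_2pi[of "real_of_int p"] by simp
  ultimately show ?thesis unfolding lp_def by (simp add: exp_add)
qed

context vmod
begin

lemma EL0_eq: "Vector_Spaces.linear sW (*) \<alpha> \<Longrightarrow> EL0 sW YW \<omega> l \<alpha> = (\<lambda>w. \<alpha> (Tl l w))"
  unfolding EL0_def Tl_def W.wsum_def Let_def by (auto simp: lin_sum lin_scale intro!: ext)

lemma zL0_eq: "zL0 sV Y \<omega> z v = V.wsum (\<lambda>n. z powi n) v"
  unfolding zL0_def V.wsum_def by simp

lemma zL0_inv: "z \<noteq> 0 \<Longrightarrow> zL0 sV Y \<omega> z (zL0 sV Y \<omega> (inverse z) v) = v"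
proof -
  assume z: "z \<noteq> 0"
  have "(\<lambda>n. z powi n * inverse z powi n) = (\<lambda>_. 1)"
    using z by (simp add: power_int_inverse)
  then show ?thesis unfolding zL0_eq V.wsum_comp by (simp add: V.wsum_one)
qed

lemma Yo_lin:
  assumes lin: "Vector_Spaces.linear sW (*) \<alpha>"
  shows "Yo_coeff sV Y \<omega> YW \<alpha> v (sW a w1 + w2) j = a * Yo_coeff sV Y \<omega> YW \<alpha> v w1 j + Yo_coeff sV Y \<omega> YW \<alpha> v w2 j"
proof -
  have e: "\<alpha> (YW u m (sW a w1 + w2)) = a * \<alpha> (YW u m w1) + \<alpha> (YW u m w2)" for u m
    by (simp add: lin_add[OF linYw] lin_scale[OF linYw] lin_add[OF lin] lin_scale[OF lin])
  show ?thesis unfolding Yo_coeff_def Let_def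
    by (simp only: e) (simp add: sum.distrib sum_distrib_left algebra_simps)
qed

lemma Yo_scale:
  assumes lin: "Vector_Spaces.linear sW (*) \<alpha>" and z: "z \<noteq> 0" and l: "exp l = z"
  shows "Yo_coeff sV Y \<omega> YW (\<lambda>w. \<alpha> (Tl l w)) (zL0 sV Y \<omega> z v) w j = Yo_coeff sV Y \<omega> YW \<alpha> v (Tl l w) j / z powi j"
proof -
  let ?c = "gcomps (Vgr sV Y \<omega>) v"
  let ?L1 = "Y \<omega> 2"
  have gc: "gcomps (Vgr sV Y \<omega>) (zL0 sV Y \<omega> z v) = (\<lambda>n. sV (z powi n) (?c n))"
    by (rule ext) (simp add: zL0_eq V.gcomps_wsum)
  have S1: "{n. sV (z powi n) (?c n) \<noteq> 0} = {n. ?c n \<noteq> 0}" using z by simp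
  have S2: "{k. (?L1 ^^ k) (sV (z powi n) (?c n)) \<noteq> 0} = {k. (?L1 ^^ k) (?c n) \<noteq> 0}" for n
    using z by (simp add: L1_pow_scale)
  have trm: "(-1) powi n / of_nat (fact k) * \<alpha> (Tl l (YW ((?L1 ^^ k) (sV (z powi n) (?c n))) (j - int k + 2 * n - 1) w))
      = ((-1) powi n / of_nat (fact k) * \<alpha> (YW ((?L1 ^^ k) (?c n)) (j - int k + 2 * n - 1) (Tl l w))) / z powi j" for n k
  proof -
    let ?u = "(?L1 ^^ k) (?c n)"
    let ?m = "j - int k + 2 * n - 1"
    have u: "?u \<in> Vgr sV Y \<omega> (n - int k)" by (rule L1_pow_weight[OF V.gcomps_props(2)])
    have "\<alpha> (Tl l (YW ((?L1 ^^ k) (sV (z powi n) (?c n))) ?m w)) = z powi n * \<alpha> (Tl l (YW ?u ?m w))"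
      by (simp add: L1_pow_scale lin_scale[OF linYv] lin_scale[OF Tl_linear] lin_scale[OF lin])
    also have "\<dots> = z powi n * (exp ((of_int (n - int k) - of_int ?m - 1) * l) * \<alpha> (YW ?u ?m (Tl l w)))"
      by (simp add: Tl_YW[OF u] lin_scale[OF lin])
    also have "exp ((of_int (n - int k) - of_int ?m - 1) * l) = z powi (- n - j)"
    proof -
      have "(of_int (n - int k) - of_int ?m - 1 :: complex) = of_int (- n - j)" by (simp add: algebra_simps)
      moreover have "exp (of_int (- n - j) * l) = z powi (- n - j)" using exp_power_int[of l "- n - j"] l by simp
      ultimately show ?thesis by metis
    qed
    also have "z powi n * (z powi (- n - j) * \<alpha> (YW ?u ?m (Tl l w))) = \<alpha> (YW ?u ?m (Tl l w)) / z powi j"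
    proof -
      have "z powi n * z powi (- n - j) = z powi (n + (- n - j))" using power_int_add[of z n "- n - j"] z by simp
      also have "\<dots> = inverse (z powi j)" by (simp add: power_int_minus)
      finally have "z powi n * z powi (- n - j) = inverse (z powi j)" .
      then show ?thesis by (simp add: divide_inverse mult.assoc[symmetric] mult.commute)
    qed
    finally show ?thesis by simp
  qed
  show ?thesis
    unfolding Yo_coeff_def Let_def gc S1 by (simp only: S2 trm sum_divide_distrib)
qed

lemma DP_map:
  assumes \<alpha>: "\<alpha> \<in> DP sV Y \<omega> sW YW z1" and z: "z \<noteq> 0" and l: "exp l = z"
  shows "(\<lambda>w. \<alpha> (Tl l w)) \<in> DP sV Y \<omega> sW YW (z * z1)"
proof -
  have lin: "Vector_Spaces.linear sW (*) \<alpha>" using \<alpha> unfolding DP_def dual_def by blast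
  have lin': "Vector_Spaces.linear sW (*) (\<lambda>w. \<alpha> (Tl l w))"
    using Vector_Spaces.linear_compose[OF Tl_linear lin] by (simp add: comp_def)
  show ?thesis unfolding DP_def
  proof (intro CollectI conjI allI)
    show "(\<lambda>w. \<alpha> (Tl l w)) \<in> dual sW" unfolding dual_def using lin' by simp
    fix v''
    define v where "v = zL0 sV Y \<omega> (inverse z) v''"
    have vv: "v'' = zL0 sV Y \<omega> z v" using zL0_inv[OF z] by (simp add: v_def)
    obtain a b where ab: "\<forall>w. \<exists>f. conv_out (Yo_coeff sV Y \<omega> YW \<alpha> v w) z1 f \<and> ratP z1 f a b"
      using \<alpha> unfolding DP_def by blast
    show "\<exists>a b. \<forall>w. \<exists>f. conv_out (Yo_coeff sV Y \<omega> YW (\<lambda>w. \<alpha> (Tl l w)) v'' w) (z * z1) f \<and> ratP (z * z1) f a b"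
    proof -
      have "\<forall>w. \<exists>f. conv_out (Yo_coeff sV Y \<omega> YW (\<lambda>w. \<alpha> (Tl l w)) v'' w) (z * z1) f \<and> ratP (z * z1) f a b"
      proof
      fix w
      obtain f where f: "conv_out (Yo_coeff sV Y \<omega> YW \<alpha> v (Tl l w)) z1 f" "ratP z1 f a b" using ab by blast
      have e: "Yo_coeff sV Y \<omega> YW (\<lambda>w. \<alpha> (Tl l w)) v'' w = (\<lambda>j. Yo_coeff sV Y \<omega> YW \<alpha> v (Tl l w) j / z powi j)"
        unfolding vv by (rule ext) (rule Yo_scale[OF lin z l])
      show "\<exists>f. conv_out (Yo_coeff sV Y \<omega> YW (\<lambda>w. \<alpha> (Tl l w)) v'' w) (z * z1) f \<and> ratP (z * z1) f a b"
        unfolding e using conv_out_scale[OF f(1) z] ratP_scale[OF f(2) z] by blast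
      qed
      then show ?thesis by blast
    qed
  qed
qed

lemma YR_LC: "YR sV Y \<omega> YW z' v \<alpha> j w = (THE c. LC z' 0 (Yo_coeff sV Y \<omega> YW \<alpha> v w) c) j"
  unfolding YR_def LC_def by simp

lemma YL_LC: "YL sV Y \<omega> YW z' v \<alpha> j w = (THE c. LC z' z' (Yo_coeff sV Y \<omega> YW \<alpha> v w) c) j"
  unfolding YL_def LC_def by simp

lemma the_LC: "LC z' s Yc c \<Longrightarrow> z' \<noteq> 0 \<Longrightarrow> s = 0 \<or> s = z' \<Longrightarrow> (THE c. LC z' s Yc c) = c"
  by (rule the_equality) (auto intro: LC_unique)

lemma LC_the:
  assumes \<alpha>: "\<alpha> \<in> DP sV Y \<omega> sW YW z'" and z': "z' \<noteq> 0" and s: "s = 0 \<or> s = z'"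
  shows "LC z' s (Yo_coeff sV Y \<omega> YW \<alpha> v w) (THE c. LC z' s (Yo_coeff sV Y \<omega> YW \<alpha> v w) c)"
proof -
  obtain a b where "\<forall>w. \<exists>f. conv_out (Yo_coeff sV Y \<omega> YW \<alpha> v w) z' f \<and> ratP z' f a b"
    using \<alpha> unfolding DP_def by blast
  then obtain f where f: "conv_out (Yo_coeff sV Y \<omega> YW \<alpha> v w) z' f" "ratP z' f a b" by blast
  obtain c where c: "LC z' s (Yo_coeff sV Y \<omega> YW \<alpha> v w) c" using LC_exists[OF z' s f] by blast
  show ?thesis using c the_LC[OF c z' s] by simp
qed

lemma LC_linear:
  assumes \<alpha>: "\<alpha> \<in> DP sV Y \<omega> sW YW z'" and z': "z' \<noteq> 0" and s: "s = 0 \<or> s = z'"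
  shows "Vector_Spaces.linear sW (*) (\<lambda>w. (THE c. LC z' s (Yo_coeff sV Y \<omega> YW \<alpha> v w) c) j)"
proof -
  have lin: "Vector_Spaces.linear sW (*) \<alpha>" using \<alpha> unfolding DP_def dual_def by blast
  define T where "T w = (THE c. LC z' s (Yo_coeff sV Y \<omega> YW \<alpha> v w) c)" for w
  have L: "LC z' s (Yo_coeff sV Y \<omega> YW \<alpha> v w) (T w)" for w unfolding T_def by (rule LC_the[OF \<alpha> z' s])
  have comb: "T (sW a w1 + w2) = (\<lambda>j. a * T w1 j + T w2 j)" for a w1 w2
  proof -
    obtain a3 b3 where "\<forall>w. \<exists>f. conv_out (Yo_coeff sV Y \<omega> YW \<alpha> v w) z' f \<and> ratP z' f a3 b3"
      using \<alpha> unfolding DP_def by blast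
    then obtain f where f: "conv_out (Yo_coeff sV Y \<omega> YW \<alpha> v (sW a w1 + w2)) z' f" "ratP z' f a3 b3" by blast
    have "LC z' s (Yo_coeff sV Y \<omega> YW \<alpha> v (sW a w1 + w2)) (\<lambda>j. a * T w1 j + T w2 j)"
      by (rule LC_lin[OF z' s L L f(1) f(2)]) (rule Yo_lin[OF lin])
    then show ?thesis unfolding T_def by (rule the_LC[OF _ z' s])
  qed
  have T0: "T 0 j' = 0" for j'
  proof -
    have "T 0 j' = T 0 j' + T 0 j'" using fun_cong[OF comb[of 1 0 0], of j'] by simp
    then show ?thesis by simp
  qed
  show ?thesis unfolding Vector_Spaces.linear_iff T_def[symmetric]
  proof (intro conjI allI)
    show "vector_space sW" by (rule vsW)
    show "vector_space ((*) :: complex \<Rightarrow> complex \<Rightarrow> complex)" by (rule lin_vs2[OF lin])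
    fix x y
    show "T (x + y) j = T x j + T y j" using fun_cong[OF comb[of 1 x y], of j] by simp
  next
    fix c x
    show "T (sW c x) j = c * T x j" using fun_cong[OF comb[of c x 0], of j] T0 by simp
  qed
qed

lemma main_eq:
  assumes \<alpha>: "\<alpha> \<in> DP sV Y \<omega> sW YW z1" and z: "z \<noteq> 0" and z1: "z1 \<noteq> 0" and l: "exp l = z"
    and s: "s = 0 \<or> s = z1"
  shows "EL0 sW YW \<omega> l (\<lambda>w. (THE c. LC z1 s (Yo_coeff sV Y \<omega> YW \<alpha> v w) c) j)
         = (\<lambda>w. z powi j * (THE c. LC (z * z1) (z * s) (Yo_coeff sV Y \<omega> YW (EL0 sW YW \<omega> l \<alpha>) (zL0 sV Y \<omega> z v) w) c) j)"
proof -
  have lin: "Vector_Spaces.linear sW (*) \<alpha>" using \<alpha> unfolding DP_def dual_def by blast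
  define T1 where "T1 w = (THE c. LC z1 s (Yo_coeff sV Y \<omega> YW \<alpha> v w) c)" for w
  have linT1: "Vector_Spaces.linear sW (*) (\<lambda>w. T1 w j)" unfolding T1_def by (rule LC_linear[OF \<alpha> z1 s])
  have LHS: "EL0 sW YW \<omega> l (\<lambda>w. T1 w j) = (\<lambda>w. T1 (Tl l w) j)" by (rule EL0_eq[OF linT1])
  have zz: "z * z1 \<noteq> 0" using z z1 by simp
  have zs: "z * s = 0 \<or> z * s = z * z1" using s by auto
  have key: "(THE c. LC (z * z1) (z * s) (Yo_coeff sV Y \<omega> YW (\<lambda>w. \<alpha> (Tl l w)) (zL0 sV Y \<omega> z v) w) c)
      = (\<lambda>j. T1 (Tl l w) j / z powi j)" for w
  proof -
    have "LC z1 s (Yo_coeff sV Y \<omega> YW \<alpha> v (Tl l w)) (T1 (Tl l w))" unfolding T1_def by (rule LC_the[OF \<alpha> z1 s])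
    from LC_scale[OF z this]
    have A: "LC (z * z1) (z * s) (\<lambda>j. Yo_coeff sV Y \<omega> YW \<alpha> v (Tl l w) j / z powi j) (\<lambda>j. T1 (Tl l w) j / z powi j)" .
    have B: "(\<lambda>j. Yo_coeff sV Y \<omega> YW \<alpha> v (Tl l w) j / z powi j) = Yo_coeff sV Y \<omega> YW (\<lambda>w. \<alpha> (Tl l w)) (zL0 sV Y \<omega> z v) w"
      by (rule ext) (rule Yo_scale[OF lin z l, symmetric])
    show ?thesis using A unfolding B by (rule the_LC[OF _ zz zs])
  qed
  show ?thesis unfolding T1_def[symmetric] LHS EL0_eq[OF lin] key using z by simp
qed

end

theorem proposition4p18:
  fixes sV :: "complex \<Rightarrow> 'v::ab_group_add \<Rightarrow> 'v" and Y :: "'v \<Rightarrow> int \<Rightarrow> 'v \<Rightarrow> 'v"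
    and one \<omega> :: 'v
    and sW :: "complex \<Rightarrow> 'w::ab_group_add \<Rightarrow> 'w" and YW :: "'v \<Rightarrow> int \<Rightarrow> 'w \<Rightarrow> 'w"
    and z z1 :: complex and p :: int
  assumes "is_VOA sV Y one \<omega>" and "is_module sV Y one \<omega> sW YW"
    and "z \<noteq> 0" and "z1 \<noteq> 0"
  shows "EL0 sW YW \<omega> (lp p z) ` DP sV Y \<omega> sW YW z1 = DP sV Y \<omega> sW YW (z * z1) \<and>
         (\<forall>v \<alpha> j. \<alpha> \<in> DP sV Y \<omega> sW YW z1 \<longrightarrow>
           EL0 sW YW \<omega> (lp p z) (YR sV Y \<omega> YW z1 v \<alpha> j)
           = (\<lambda>w. z powi j * YR sV Y \<omega> YW (z * z1) (zL0 sV Y \<omega> z v) (EL0 sW YW \<omega> (lp p z) \<alpha>) j w)) \<and>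
         (\<forall>v \<alpha> j. \<alpha> \<in> DP sV Y \<omega> sW YW z1 \<longrightarrow>
           EL0 sW YW \<omega> (lp p z) (YL sV Y \<omega> YW z1 v \<alpha> j)
           = (\<lambda>w. z powi j * YL sV Y \<omega> YW (z * z1) (zL0 sV Y \<omega> z v) (EL0 sW YW \<omega> (lp p z) \<alpha>) j w))"
proof -
  interpret vmod sV Y one \<omega> sW YW by (rule vmod.intro) (rule assms)+
  have z: "z \<noteq> 0" and z1: "z1 \<noteq> 0" using assms by auto
  have l: "exp (lp p z) = z" by (rule exp_lp[OF z])
  have l': "exp (- lp p z) = inverse z" using l by (simp add: exp_minus)
  have zi: "inverse z \<noteq> 0" using z by simp
  have P1: "EL0 sW YW \<omega> (lp p z) ` DP sV Y \<omega> sW YW z1 = DP sV Y \<omega> sW YW (z * z1)"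
  proof
    show "EL0 sW YW \<omega> (lp p z) ` DP sV Y \<omega> sW YW z1 \<subseteq> DP sV Y \<omega> sW YW (z * z1)"
    proof clarify
      fix \<alpha> assume \<alpha>: "\<alpha> \<in> DP sV Y \<omega> sW YW z1"
      have lin: "Vector_Spaces.linear sW (*) \<alpha>" using \<alpha> unfolding DP_def dual_def by blast
      show "EL0 sW YW \<omega> (lp p z) \<alpha> \<in> DP sV Y \<omega> sW YW (z * z1)"
        unfolding EL0_eq[OF lin] by (rule DP_map[OF \<alpha> z l])
    qed
  next
    show "DP sV Y \<omega> sW YW (z * z1) \<subseteq> EL0 sW YW \<omega> (lp p z) ` DP sV Y \<omega> sW YW z1"
    proof
      fix \<beta> assume \<beta>: "\<beta> \<in> DP sV Y \<omega> sW YW (z * z1)"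
      have "(\<lambda>w. \<beta> (Tl (- lp p z) w)) \<in> DP sV Y \<omega> sW YW (inverse z * (z * z1))"
        by (rule DP_map[OF \<beta> zi l'])
      moreover have "inverse z * (z * z1) = z1" using z by (simp add: mult.assoc[symmetric])
      ultimately have \<alpha>: "(\<lambda>w. \<beta> (Tl (- lp p z) w)) \<in> DP sV Y \<omega> sW YW z1" by simp
      have lin: "Vector_Spaces.linear sW (*) (\<lambda>w. \<beta> (Tl (- lp p z) w))" using \<alpha> unfolding DP_def dual_def by blast
      have "EL0 sW YW \<omega> (lp p z) (\<lambda>w. \<beta> (Tl (- lp p z) w)) = \<beta>"
        unfolding EL0_eq[OF lin] Tl_comp by (simp add: Tl_0)
      then show "\<beta> \<in> EL0 sW YW \<omega> (lp p z) ` DP sV Y \<omega> sW YW z1" using \<alpha> by (metis imageI)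
    qed
  qed
  have P2: "EL0 sW YW \<omega> (lp p z) (YR sV Y \<omega> YW z1 v \<alpha> j)
           = (\<lambda>w. z powi j * YR sV Y \<omega> YW (z * z1) (zL0 sV Y \<omega> z v) (EL0 sW YW \<omega> (lp p z) \<alpha>) j w)"
    if \<alpha>: "\<alpha> \<in> DP sV Y \<omega> sW YW z1" for v \<alpha> j
  proof -
    have e: "YR sV Y \<omega> YW z1 v \<alpha> j = (\<lambda>w. (THE c. LC z1 0 (Yo_coeff sV Y \<omega> YW \<alpha> v w) c) j)"
      by (rule ext) (rule YR_LC)
    show ?thesis unfolding e YR_LC using main_eq[OF \<alpha> z z1 l, of 0 v j] by simp
  qed
  have P3: "EL0 sW YW \<omega> (lp p z) (YL sV Y \<omega> YW z1 v \<alpha> j)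
           = (\<lambda>w. z powi j * YL sV Y \<omega> YW (z * z1) (zL0 sV Y \<omega> z v) (EL0 sW YW \<omega> (lp p z) \<alpha>) j w)"
    if \<alpha>: "\<alpha> \<in> DP sV Y \<omega> sW YW z1" for v \<alpha> j
  proof -
    have e: "YL sV Y \<omega> YW z1 v \<alpha> j = (\<lambda>w. (THE c. LC z1 z1 (Yo_coeff sV Y \<omega> YW \<alpha> v w) c) j)"
      by (rule ext) (rule YL_LC)
    show ?thesis unfolding e YL_LC using main_eq[OF \<alpha> z z1 l, of z1 v j] by simp
  qed
  show ?thesis using P1 P2 P3 by blast
qed


end
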